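(* Let $d,n\ge 1$. Let $\Sigma=U\Lambda U^\top$ be a $d\times d$ covariance matrix, where $U$ is orthogonal and $\Lambda=\mathrm{diag}(\lambda_1,\dots,\lambda_d)$. Let $x^{(1)},\dots,x^{(n+1)}\in\mathbb{R}^d$ be i.i.d. $\mathcal{N}(0,\Sigma)$, let $w_\star\sim\mathcal{N}(0,I_d)$ be independent of them, and set $y^{(i)}=\langle x^{(i)},w_\star\rangle$ for $i=1,\dots,n$. Let $$Z_0=\begin{bmatrix} x^{(1)} & \cdots & x^{(n)} & x^{(n+1)}\\ y^{(1)} & \cdots & y^{(n)} & 0\end{bmatrix}\in\mathbb{R}^{(d+1)\times(n+1)},\qquad M=\begin{bmatrix} I_n & 0\\ 0& 0\end{bmatrix}\in\mathbb{R}^{(n+1)\times(n+1)}.$$ For $b\in\mathbb{R}^{d+1}$ and $A\in\mathbb{R}^{(d+1)\times d}$ let $P=\begin{bmatrix}0_{d\times(d+1)}\\ b^\top\end{bmatrix}\in\mathbb{R}^{(d+1)\times(d+1)}$ and $Q=\begin{bmatrix}A & 0_{(d+1)\times 1}\end{bmatrix}\in\mathbb{R}^{(d+1)\times(d+1)}$, let $Z_1=Z_0+\frac1n PZ_0M(Z_0^\top QZ_0)$, and define $$f(b,A)=\mathbb{E}\Big[\big([Z_1]_{d+1,n+1}+w_\star^\top x^{(n+1)}\big)^2\Big].$$ Then the choice $$b^\top=[0\ 0\ \cdots\ 0\ 1],\qquad A=-\begin{bmatrix} U\,\mathrm{diag}\Big(\Big\{\frac{1}{\frac{n+1}{n}\lambda_i+\frac1n\sum_{k=1}^d\lambda_k}\Big\}_{i=1}^d\Big)U^\top\\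 0_{1\times d}\end{bmatrix}$$ is a global minimum of $f$ over all $b\in\mathbb{R}^{d+1}$, $A\in\mathbb{R}^{(d+1)\times d}$; moreover, for every $\gamma\neq0$, the rescaled pair $(\gamma b,\gamma^{-1}A)$ is also a global minimum.
   Context: $[X]_{i,j}$ denotes the $(i,j)$ entry of a matrix $X$. The expectation is over $x^{(1)},\dots,x^{(n+1)}$ and $w_\star$. *)

theory Defs
  imports "HOL-Probability.Probability"
begin

text \<open>Conventions: vectors are functions nat => real, matrices are functions
nat => nat => real; all indices are 0-based and only the entries inside the
stated ranges are relevant. Row/column d (resp. n) of the paper is index d+1
(resp. n+1) there.\<close>

definition mat_mult :: "nat \<Rightarrow> (nat \<Rightarrow> nat \<Rightarrow> real) \<Rightarrow> (nat \<Rightarrow> nat \<Rightarrow> real) \<Rightarrow> (nat \<Rightarrow> nat \<Rightarrow> real)" where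
  "mat_mult k X Y = (\<lambda>i j. \<Sum>l<k. X i l * Y l j)"

definition mat_transpose :: "(nat \<Rightarrow> nat \<Rightarrow> real) \<Rightarrow> (nat \<Rightarrow> nat \<Rightarrow> real)" where
  "mat_transpose X = (\<lambda>i j. X j i)"

definition std_gauss :: "real measure" where
  "std_gauss = density lborel (\<lambda>x. ennreal (std_normal_density x))"

definition std_gauss_vec :: "nat \<Rightarrow> (nat \<Rightarrow> real) measure" where
  "std_gauss_vec d = PiM {..<d} (\<lambda>_. std_gauss)"

text \<open>N(0, R R^T): the law of R g for g ~ N(0, I_d).\<close>
definition gauss_vec :: "nat \<Rightarrow> (nat \<Rightarrow> nat \<Rightarrow> real) \<Rightarrow> (nat \<Rightarrow> real) measure" where
  "gauss_vec d R = distr (std_gauss_vec d) (PiM {..<d} (\<lambda>_. lborel))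
      (\<lambda>g. restrict (\<lambda>j. \<Sum>k<d. R j k * g k) {..<d})"

definition spectral_mat :: "nat \<Rightarrow> (nat \<Rightarrow> nat \<Rightarrow> real) \<Rightarrow> (nat \<Rightarrow> real) \<Rightarrow> (nat \<Rightarrow> nat \<Rightarrow> real)" where
  "spectral_mat d U lam = (\<lambda>i j. \<Sum>k<d. U i k * lam k * U j k)"

definition cov_gauss :: "nat \<Rightarrow> (nat \<Rightarrow> nat \<Rightarrow> real) \<Rightarrow> (nat \<Rightarrow> real) \<Rightarrow> (nat \<Rightarrow> real) measure" where
  "cov_gauss d U lam = gauss_vec d (spectral_mat d U (\<lambda>k. sqrt (lam k)))"

text \<open>Joint law of (x^(1),...,x^(n+1), w_star): index i < n+1 is x^(i+1) ~ N(0,Sigma),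
index n+1 is w_star ~ N(0,I_d); all independent.\<close>
definition data_measure :: "nat \<Rightarrow> nat \<Rightarrow> (nat \<Rightarrow> nat \<Rightarrow> real) \<Rightarrow> (nat \<Rightarrow> real) \<Rightarrow> (nat \<Rightarrow> nat \<Rightarrow> real) measure" where
  "data_measure d n U lam =
     PiM {..n+1} (\<lambda>i. if i \<le> n then cov_gauss d U lam else std_gauss_vec d)"

text \<open>Z_0 in R^{(d+1) x (n+1)}; omega i = x^(i+1) for i <= n, omega (n+1) = w_star,
y^(i+1) = <x^(i+1), w_star>.\<close>
definition Z0 :: "nat \<Rightarrow> nat \<Rightarrow> (nat \<Rightarrow> nat \<Rightarrow> real) \<Rightarrow> (nat \<Rightarrow> nat \<Rightarrow> real)" where
  "Z0 d n \<omega> = (\<lambda>i j. if i < d then \<omega> j i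
                      else if j < n then (\<Sum>k<d. \<omega> j k * \<omega> (n+1) k) else 0)"

definition Mmask :: "nat \<Rightarrow> (nat \<Rightarrow> nat \<Rightarrow> real)" where
  "Mmask n = (\<lambda>i j. if i = j \<and> i < n then 1 else 0)"

definition Pmat :: "nat \<Rightarrow> (nat \<Rightarrow> real) \<Rightarrow> (nat \<Rightarrow> nat \<Rightarrow> real)" where
  "Pmat d b = (\<lambda>i j. if i = d then b j else 0)"

definition Qmat :: "nat \<Rightarrow> (nat \<Rightarrow> nat \<Rightarrow> real) \<Rightarrow> (nat \<Rightarrow> nat \<Rightarrow> real)" where
  "Qmat d A = (\<lambda>i j. if j < d then A i j else 0)"

definition Z1 :: "nat \<Rightarrow> nat \<Rightarrow> (nat \<Rightarrow> real) \<Rightarrow> (nat \<Rightarrow> nat \<Rightarrow> real) \<Rightarrow> (nat \<Rightarrow> nat \<Rightarrow> real) \<Rightarrow> (nat \<Rightarrow> nat \<Rightarrow> real)" where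
  "Z1 d n b A \<omega> =
     (let Z = Z0 d n \<omega>;
          G = mat_mult (d+1) (mat_mult (d+1) (mat_transpose Z) (Qmat d A)) Z;
          L = mat_mult (n+1) (mat_mult (d+1) (Pmat d b) Z) (Mmask n)
      in (\<lambda>i j. Z i j + (1 / real n) * mat_mult (n+1) L G i j))"

definition icl_loss :: "nat \<Rightarrow> nat \<Rightarrow> (nat \<Rightarrow> nat \<Rightarrow> real) \<Rightarrow> (nat \<Rightarrow> real) \<Rightarrow> (nat \<Rightarrow> real) \<Rightarrow> (nat \<Rightarrow> nat \<Rightarrow> real) \<Rightarrow> real" where
  "icl_loss d n U lam b A =
     (\<integral>\<omega>. (Z1 d n b A \<omega> d n + (\<Sum>k<d. \<omega> (n+1) k * \<omega> n k))\<^sup>2 \<partial>data_measure d n U lam)"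

definition b_opt :: "nat \<Rightarrow> (nat \<Rightarrow> real)" where
  "b_opt d = (\<lambda>j. if j = d then 1 else 0)"

definition A_opt :: "nat \<Rightarrow> nat \<Rightarrow> (nat \<Rightarrow> nat \<Rightarrow> real) \<Rightarrow> (nat \<Rightarrow> real) \<Rightarrow> (nat \<Rightarrow> nat \<Rightarrow> real)" where
  "A_opt d n U lam = (\<lambda>i j. if i < d then
       - (\<Sum>k<d. U i k * (1 / ((real n + 1) / real n * lam k + (1 / real n) * (\<Sum>m<d. lam m))) * U j k)
     else 0)"

end

theory Submission
  imports Defs "Jordan_Normal_Form.Determinant"
begin


lemma orth_cols:
  fixes U :: "nat \<Rightarrow> nat \<Rightarrow> real"
  assumes orth: "\<And>i j. i < d \<Longrightarrow> j < d \<Longrightarrow> (\<Sum>k<d. U i k * U j k) = (if i = j then 1 else 0)"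
    and "i < d" "j < d"
  shows "(\<Sum>k<d. U k i * U k j) = (if i = j then 1 else 0)"
proof -
  define UM :: "real mat" where "UM = mat d d (\<lambda>(i,j). U i j)"
  have c1: "UM \<in> carrier_mat d d" "transpose_mat UM \<in> carrier_mat d d" unfolding UM_def by auto
  have "UM * transpose_mat UM = 1\<^sub>m d"
    by (rule eq_matI) (auto simp: UM_def scalar_prod_def orth atLeast0LessThan)
  then have "transpose_mat UM * UM = 1\<^sub>m d" using mat_mult_left_right_inverse c1 by blast
  then have "(transpose_mat UM * UM) $$ (i,j) = (1\<^sub>m d :: real mat) $$ (i,j)" by simp
  then show ?thesis using assms(2,3) by (simp add: UM_def scalar_prod_def atLeast0LessThan)
qed


lemma prob_std_gauss: "prob_space std_gauss"
  unfolding std_gauss_def by (rule prob_space_normal_density) simp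

lemma sets_std_gauss: "sets std_gauss = sets borel"
  unfolding std_gauss_def by simp

lemma space_std_gauss: "space std_gauss = UNIV"
  unfolding std_gauss_def by simp

lemma integrable_std_gauss_iff:
  fixes f :: "real \<Rightarrow> real"
  assumes "f \<in> borel_measurable borel"
  shows "integrable std_gauss f \<longleftrightarrow> integrable lborel (\<lambda>x. std_normal_density x * f x)"
  unfolding std_gauss_def using assms by (subst integrable_density) auto

lemma integral_std_gauss:
  fixes f :: "real \<Rightarrow> real"
  assumes "f \<in> borel_measurable borel"
  shows "integral\<^sup>L std_gauss f = (\<integral>x. std_normal_density x * f x \<partial>lborel)"
  unfolding std_gauss_def using assms by (subst integral_density) auto

lemma std_gauss_int_pow: "integrable std_gauss (\<lambda>x. x ^ k)"
  by (subst integrable_std_gauss_iff) (auto intro: integrable_std_normal_moment)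

lemma std_gauss_int_abs_pow: "integrable std_gauss (\<lambda>x. \<bar>x\<bar> ^ k)"
  by (subst integrable_std_gauss_iff) (auto intro: integrable_std_normal_moment_abs)

definition mu :: "nat \<Rightarrow> real" where "mu k = integral\<^sup>L std_gauss (\<lambda>x. x ^ k)"

lemma mu_even: "mu (2*k) = fact (2 * k) / (2^k * fact k)"
  unfolding mu_def by (subst integral_std_gauss) (auto simp: integral_std_normal_moment_even)

lemma mu_odd: "mu (2*k+1) = 0"
  unfolding mu_def by (subst integral_std_gauss, simp, rule integral_std_normal_moment_odd)

lemma mu_vals: "mu 0 = 1" "mu 1 = 0" "mu 2 = 1" "mu 3 = 0" "mu 4 = 3"
  using mu_even[of 0] mu_odd[of 0] mu_even[of 1] mu_odd[of 1] mu_even[of 2]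
  by (simp_all add: eval_nat_numeral)


definition allmom :: "'a measure \<Rightarrow> ('a \<Rightarrow> real) \<Rightarrow> bool" where
  "allmom M f \<longleftrightarrow> f \<in> borel_measurable M \<and> (\<forall>k. integrable M (\<lambda>x. \<bar>f x\<bar> ^ k))"

lemma allmom_integrable: "allmom M f \<Longrightarrow> integrable M f"
proof -
  assume a: "allmom M f"
  then have m: "f \<in> borel_measurable M" and i: "integrable M (\<lambda>x. \<bar>f x\<bar> ^ 1)" unfolding allmom_def by blast+
  from i have "integrable M (\<lambda>x. \<bar>f x\<bar>)" by simp
  then show ?thesis using integrable_abs_iff[OF m] by blast
qed

lemma abs_add_pow_le: "\<bar>a + b\<bar> ^ k \<le> 2 ^ k * (\<bar>a\<bar> ^ k + \<bar>b::real\<bar> ^ k)"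
proof (cases "\<bar>a\<bar> \<le> \<bar>b\<bar>")
  case True
  have "\<bar>a + b\<bar> \<le> 2 * \<bar>b\<bar>" using True by linarith
  then have "\<bar>a + b\<bar> ^ k \<le> (2 * \<bar>b\<bar>) ^ k" by (rule power_mono) simp
  also have "\<dots> = 2 ^ k * \<bar>b\<bar> ^ k" by (rule power_mult_distrib)
  also have "\<dots> \<le> 2 ^ k * (\<bar>a\<bar> ^ k + \<bar>b\<bar> ^ k)" by (intro mult_left_mono) auto
  finally show ?thesis .
next
  case False
  have "\<bar>a + b\<bar> \<le> 2 * \<bar>a\<bar>" using False by linarith
  then have "\<bar>a + b\<bar> ^ k \<le> (2 * \<bar>a\<bar>) ^ k" by (rule power_mono) simp
  also have "\<dots> = 2 ^ k * \<bar>a\<bar> ^ k" by (rule power_mult_distrib)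
  also have "\<dots> \<le> 2 ^ k * (\<bar>a\<bar> ^ k + \<bar>b\<bar> ^ k)" by (intro mult_left_mono) auto
  finally show ?thesis .
qed

lemma abs_mult_pow_le: "\<bar>a * b\<bar> ^ k \<le> \<bar>a\<bar> ^ (2*k) + \<bar>b::real\<bar> ^ (2*k)"
proof -
  have "\<bar>a * b\<bar> ^ k = \<bar>a\<bar>^k * \<bar>b\<bar>^k" by (simp add: abs_mult power_mult_distrib)
  also have "\<dots> \<le> (\<bar>a\<bar>^k)^2 + (\<bar>b\<bar>^k)^2"
  proof -
    have "0 \<le> \<bar>a\<bar>^k*\<bar>b\<bar>^k" by simp
    moreover have "2 * (\<bar>a\<bar>^k*\<bar>b\<bar>^k) \<le> (\<bar>a\<bar>^k)^2 + (\<bar>b\<bar>^k)^2"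
      using sum_squares_bound[of "\<bar>a\<bar>^k" "\<bar>b\<bar>^k"] by (simp add: mult.assoc)
    ultimately show ?thesis by linarith
  qed
  also have "(\<bar>a\<bar>^k)^2 = \<bar>a\<bar> ^ (2*k)" by (rule power_even_eq[symmetric])
  also have "(\<bar>b\<bar>^k)^2 = \<bar>b\<bar> ^ (2*k)" by (rule power_even_eq[symmetric])
  finally show ?thesis .
qed

lemma allmom_add:
  assumes "allmom M f" "allmom M g" shows "allmom M (\<lambda>x. f x + g x)"
proof -
  have mf: "f \<in> borel_measurable M" and mg: "g \<in> borel_measurable M"
    and if_: "\<And>k. integrable M (\<lambda>x. \<bar>f x\<bar> ^ k)" and ig: "\<And>k. integrable M (\<lambda>x. \<bar>g x\<bar> ^ k)"
    using assms unfolding allmom_def by blast+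
  have m: "(\<lambda>x. f x + g x) \<in> borel_measurable M" using mf mg by (rule borel_measurable_add)
  have "integrable M (\<lambda>x. \<bar>f x + g x\<bar> ^ k)" for k
  proof (rule Bochner_Integration.integrable_bound)
    show "integrable M (\<lambda>x. 2 ^ k * (\<bar>f x\<bar> ^ k + \<bar>g x\<bar> ^ k))"
      by (intro integrable_mult_right Bochner_Integration.integrable_add if_ ig)
    show "(\<lambda>x. \<bar>f x + g x\<bar> ^ k) \<in> borel_measurable M"
      by (intro borel_measurable_power borel_measurable_abs m)
    show "AE x in M. norm (\<bar>f x + g x\<bar> ^ k) \<le> norm (2 ^ k * (\<bar>f x\<bar> ^ k + \<bar>g x\<bar> ^ k))"
    proof (intro AE_I2)
      fix x
      have "\<bar>f x + g x\<bar> ^ k \<le> 2 ^ k * (\<bar>f x\<bar> ^ k + \<bar>g x\<bar> ^ k)" by (rule abs_add_pow_le)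
      then show "norm (\<bar>f x + g x\<bar> ^ k) \<le> norm (2 ^ k * (\<bar>f x\<bar> ^ k + \<bar>g x\<bar> ^ k))"
        by (simp only: real_norm_def power_abs abs_abs, (smt (verit) zero_le_power abs_ge_zero abs_mult abs_of_nonneg)?)
    qed
  qed
  then show ?thesis using m unfolding allmom_def by blast
qed

lemma allmom_mult:
  assumes "allmom M f" "allmom M g" shows "allmom M (\<lambda>x. f x * g x)"
proof -
  have mf: "f \<in> borel_measurable M" and mg: "g \<in> borel_measurable M"
    and if_: "\<And>k. integrable M (\<lambda>x. \<bar>f x\<bar> ^ k)" and ig: "\<And>k. integrable M (\<lambda>x. \<bar>g x\<bar> ^ k)"
    using assms unfolding allmom_def by blast+
  have m: "(\<lambda>x. f x * g x) \<in> borel_measurable M" using mf mg by (rule borel_measurable_times)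
  have "integrable M (\<lambda>x. \<bar>f x * g x\<bar> ^ k)" for k
  proof (rule Bochner_Integration.integrable_bound)
    show "integrable M (\<lambda>x. \<bar>f x\<bar> ^ (2*k) + \<bar>g x\<bar> ^ (2*k))"
      by (intro Bochner_Integration.integrable_add if_ ig)
    show "(\<lambda>x. \<bar>f x * g x\<bar> ^ k) \<in> borel_measurable M"
      by (intro borel_measurable_power borel_measurable_abs m)
    show "AE x in M. norm (\<bar>f x * g x\<bar> ^ k) \<le> norm (\<bar>f x\<bar> ^ (2*k) + \<bar>g x\<bar> ^ (2*k))"
    proof (intro AE_I2)
      fix x
      have "\<bar>f x * g x\<bar> ^ k \<le> \<bar>f x\<bar> ^ (2*k) + \<bar>g x\<bar> ^ (2*k)" by (rule abs_mult_pow_le)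
      then show "norm (\<bar>f x * g x\<bar> ^ k) \<le> norm (\<bar>f x\<bar> ^ (2*k) + \<bar>g x\<bar> ^ (2*k))"
        by (simp only: real_norm_def power_abs abs_abs, (smt (verit) zero_le_power abs_ge_zero abs_mult abs_of_nonneg)?)
    qed
  qed
  then show ?thesis using m unfolding allmom_def by blast
qed

lemma allmom_const: "finite_measure M \<Longrightarrow> allmom M (\<lambda>x. c)"
  unfolding allmom_def by (intro conjI allI borel_measurable_const finite_measure.integrable_const)

lemma allmom_minus: "allmom M f \<Longrightarrow> allmom M (\<lambda>x. - f x)"
  unfolding allmom_def by (simp only: abs_minus_cancel) (blast intro: borel_measurable_uminus)

lemma allmom_diff: "allmom M f \<Longrightarrow> allmom M g \<Longrightarrow> allmom M (\<lambda>x. f x - g x)"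
  using allmom_add[of M f "\<lambda>x. - g x"] allmom_minus[of M g] by simp

lemma allmom_cmult: "finite_measure M \<Longrightarrow> allmom M f \<Longrightarrow> allmom M (\<lambda>x. c * f x)"
  using allmom_mult[OF allmom_const] by blast

lemma allmom_sum:
  assumes "finite_measure M" "\<And>i. i \<in> I \<Longrightarrow> allmom M (f i)"
  shows "allmom M (\<lambda>x. \<Sum>i\<in>I. f i x)"
  using assms(2)
proof (induction I rule: infinite_finite_induct)
  case (infinite A) then show ?case using allmom_const[OF assms(1), of 0] by simp
next
  case empty then show ?case using allmom_const[OF assms(1), of 0] by simp
next
  case (insert a A)
  have "allmom M (\<lambda>x. f a x + (\<Sum>i\<in>A. f i x))"
    by (rule allmom_add) (use insert in auto)
  then show ?case using insert(1,2) by simp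
qed

lemma allmom_power: "finite_measure M \<Longrightarrow> allmom M f \<Longrightarrow> allmom M (\<lambda>x. f x ^ k)"
proof (induction k)
  case 0 then show ?case using allmom_const[of M 1] by simp
next
  case (Suc k) then show ?case using allmom_mult[of M f "\<lambda>x. f x ^ k"] by simp
qed

lemma allmom_std_gauss: "allmom std_gauss (\<lambda>x. x)"
proof -
  have "(\<lambda>x. x) \<in> borel_measurable std_gauss" by (simp add: measurable_cong_sets[OF sets_std_gauss refl])
  then show ?thesis unfolding allmom_def using std_gauss_int_abs_pow by blast
qed


lemma allmom_distr:
  assumes T: "T \<in> measurable M N" and f: "f \<in> borel_measurable N" and a: "allmom M (\<lambda>x. f (T x))"
  shows "allmom (distr M N T) f"
  unfolding allmom_def using a T f
  by (auto simp: allmom_def integrable_distr_eq)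

lemma allmom_component:
  assumes P: "\<And>i. i \<in> I \<Longrightarrow> prob_space (M i)" and i: "i \<in> I" and a: "allmom (M i) f"
  shows "allmom (PiM I M) (\<lambda>\<omega>. f (\<omega> i))"
proof -
  have m: "f \<in> borel_measurable (M i)" using a by (simp add: allmom_def)
  have "allmom (distr (PiM I M) (M i) (\<lambda>\<omega>. \<omega> i)) f"
    using distr_PiM_component[of I M i, OF P i] a by simp
  then show ?thesis using i m
    by (auto simp: allmom_def integrable_distr_eq measurable_component_singleton)
qed

lemma integral_component:
  fixes f :: "'a \<Rightarrow> real"
  assumes P: "\<And>i. i \<in> I \<Longrightarrow> prob_space (M i)" and i: "i \<in> I" and m: "f \<in> borel_measurable (M i)"
  shows "(\<integral>\<omega>. f (\<omega> i) \<partial>PiM I M) = integral\<^sup>L (M i) f"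
proof -
  have "integral\<^sup>L (M i) f = integral\<^sup>L (distr (PiM I M) (M i) (\<lambda>\<omega>. \<omega> i)) f"
    using distr_PiM_component[of I M i, OF P i] by simp
  also have "\<dots> = (\<integral>\<omega>. f (\<omega> i) \<partial>PiM I M)"
    using i m by (simp add: integral_distr measurable_component_singleton)
  finally show ?thesis by simp
qed

lemma prod_list_count:
  fixes f :: "'a \<Rightarrow> 'b::comm_monoid_mult"
  assumes "finite I" "set as \<subseteq> I"
  shows "(\<Prod>a\<leftarrow>as. f a) = (\<Prod>i\<in>I. f i ^ count_list as i)"
  using assms(2)
proof (induction as)
  case Nil then show ?case by simp
next
  case (Cons a as)
  have "(\<Prod>i\<in>I. f i ^ count_list (a # as) i) = (\<Prod>i\<in>I. f i ^ count_list as i * (if i = a then f i else 1))"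
    by (intro prod.cong) (auto simp: mult.commute)
  also have "\<dots> = (\<Prod>i\<in>I. f i ^ count_list as i) * f a"
    using Cons.prems assms(1) by (simp add: prod.distrib prod.delta')
  finally show ?case using Cons by (simp add: mult.commute)
qed

lemma prob_std_gauss_vec: "prob_space (std_gauss_vec d)"
  unfolding std_gauss_vec_def by (intro prob_space_PiM prob_std_gauss)

lemma sets_std_gauss_vec: "sets (std_gauss_vec d) = sets (PiM {..<d} (\<lambda>_. borel))"
  unfolding std_gauss_vec_def by (intro sets_PiM_cong) (auto simp: sets_std_gauss)

lemma allmom_std_coord: "a < d \<Longrightarrow> allmom (std_gauss_vec d) (\<lambda>g. g a)"
  unfolding std_gauss_vec_def
  by (rule allmom_component[where f="\<lambda>x. x", OF prob_std_gauss _ allmom_std_gauss]) auto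

interpretation sgp: product_sigma_finite "\<lambda>_::nat. std_gauss"
  unfolding product_sigma_finite_def using prob_space_imp_sigma_finite[OF prob_std_gauss] by simp

lemma std_vec_moment:
  assumes "set as \<subseteq> {..<d}"
  shows "(\<integral>g. (\<Prod>a\<leftarrow>as. g a) \<partial>std_gauss_vec d) = (\<Prod>i\<in>set as. mu (count_list as i))"
proof -
  have "(\<integral>g. (\<Prod>a\<leftarrow>as. g a) \<partial>std_gauss_vec d) = (\<integral>g. (\<Prod>i\<in>{..<d}. g i ^ count_list as i) \<partial>std_gauss_vec d)"
    by (simp add: prod_list_count[OF _ assms])
  also have "\<dots> = (\<Prod>i\<in>{..<d}. mu (count_list as i))"
    unfolding std_gauss_vec_def mu_def
    by (rule sgp.product_integral_prod) (auto intro: std_gauss_int_pow)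
  also have "\<dots> = (\<Prod>i\<in>set as. mu (count_list as i))"
    using assms by (intro prod.mono_neutral_right) (auto simp: mu_vals count_list_0_iff)
  finally show ?thesis .
qed

lemma mu_simps: "mu 0 = 1" "mu (Suc 0) = 0" "mu (Suc (Suc 0)) = 1" "mu (Suc (Suc (Suc 0))) = 0"
  "mu (Suc (Suc (Suc (Suc 0)))) = 3" "mu 1 = 0" "mu 2 = 1" "mu 3 = 0" "mu 4 = 3"
  using mu_vals by (simp_all add: eval_nat_numeral)

lemma std_m1: "a < d \<Longrightarrow> (\<integral>g. g a \<partial>std_gauss_vec d) = 0"
  using std_vec_moment[of "[a]" d] by (simp add: mu_simps)

lemma std_m2: "a < d \<Longrightarrow> b < d \<Longrightarrow> (\<integral>g. g a * g b \<partial>std_gauss_vec d) = (if a = b then 1 else 0)"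
  using std_vec_moment[of "[a,b]" d] by (cases "a = b") (auto simp: mu_simps insert_absorb)

lemma std_m3: "a < d \<Longrightarrow> b < d \<Longrightarrow> c < d \<Longrightarrow> (\<integral>g. g a * (g b * g c) \<partial>std_gauss_vec d) = 0"
  using std_vec_moment[of "[a,b,c]" d] by (cases "a = b"; cases "a = c"; cases "b = c") (auto simp: mu_simps insert_absorb)

lemma std_m4: "a < d \<Longrightarrow> b < d \<Longrightarrow> c < d \<Longrightarrow> e < d \<Longrightarrow>
   (\<integral>g. g a * (g b * (g c * g e)) \<partial>std_gauss_vec d) =
     (if a = b \<and> c = e then 1 else 0) + (if a = c \<and> b = e then 1 else 0) + (if a = e \<and> b = c then 1 else 0)"
  using std_vec_moment[of "[a,b,c,e]" d]
  by (cases "a = b"; cases "a = c"; cases "a = e"; cases "b = c"; cases "b = e"; cases "c = e") (auto simp: mu_simps insert_absorb)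


lemma prob_fm: "prob_space M \<Longrightarrow> finite_measure M"
  unfolding prob_space_def by blast

lemma fm_std: "finite_measure (std_gauss_vec d)"
  by (rule prob_fm[OF prob_std_gauss_vec])

definition dlt :: "nat \<Rightarrow> nat \<Rightarrow> real" where "dlt i j = (if i = j then 1 else 0)"

lemma sum_dlt1: "finite I \<Longrightarrow> a \<in> I \<Longrightarrow> (\<Sum>j\<in>I. f j * dlt a j) = f a"
  by (simp add: dlt_def if_distrib sum.delta cong: if_cong)

lemma sum_dlt2: "finite I \<Longrightarrow> a \<in> I \<Longrightarrow> (\<Sum>j\<in>I. f j * dlt j a) = f a"
  by (simp add: dlt_def if_distrib sum.delta' cong: if_cong)

lemma E4_collapse:
  fixes F :: "nat \<Rightarrow> nat \<Rightarrow> nat \<Rightarrow> nat \<Rightarrow> real"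
  assumes I: "finite I"
  shows "(\<Sum>k1\<in>I. \<Sum>k2\<in>I. \<Sum>k3\<in>I. \<Sum>k4\<in>I. F k1 k2 k3 k4 *
            (dlt k1 k2 * dlt k3 k4 + dlt k1 k3 * dlt k2 k4 + dlt k1 k4 * dlt k2 k3))
       = (\<Sum>k1\<in>I. \<Sum>k3\<in>I. F k1 k1 k3 k3) + (\<Sum>k1\<in>I. \<Sum>k2\<in>I. F k1 k2 k1 k2)
         + (\<Sum>k1\<in>I. \<Sum>k2\<in>I. F k1 k2 k2 k1)"
proof -
  have t1: "(\<Sum>k1\<in>I. \<Sum>k2\<in>I. \<Sum>k3\<in>I. \<Sum>k4\<in>I. F k1 k2 k3 k4 * (dlt k1 k2 * dlt k3 k4))
      = (\<Sum>k1\<in>I. \<Sum>k3\<in>I. F k1 k1 k3 k3)"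
  proof -
    have "(\<Sum>k1\<in>I. \<Sum>k2\<in>I. \<Sum>k3\<in>I. \<Sum>k4\<in>I. F k1 k2 k3 k4 * (dlt k1 k2 * dlt k3 k4))
        = (\<Sum>k1\<in>I. \<Sum>k2\<in>I. \<Sum>k3\<in>I. \<Sum>k4\<in>I. (F k1 k2 k3 k4 * dlt k1 k2) * dlt k3 k4)"
      by (simp add: mult.assoc)
    also have "\<dots> = (\<Sum>k1\<in>I. \<Sum>k2\<in>I. \<Sum>k3\<in>I. F k1 k2 k3 k3 * dlt k1 k2)"
      using I by (intro sum.cong refl) (simp add: sum_dlt1)
    also have "\<dots> = (\<Sum>k1\<in>I. \<Sum>k2\<in>I. (\<Sum>k3\<in>I. F k1 k2 k3 k3) * dlt k1 k2)"
      by (simp add: sum_distrib_right)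
    also have "\<dots> = (\<Sum>k1\<in>I. \<Sum>k3\<in>I. F k1 k1 k3 k3)"
      by (rule sum.cong[OF refl]) (simp add: sum_dlt1 I)
    finally show ?thesis .
  qed
  have t2: "(\<Sum>k1\<in>I. \<Sum>k2\<in>I. \<Sum>k3\<in>I. \<Sum>k4\<in>I. F k1 k2 k3 k4 * (dlt k1 k3 * dlt k2 k4))
      = (\<Sum>k1\<in>I. \<Sum>k2\<in>I. F k1 k2 k1 k2)"
  proof -
    have "(\<Sum>k1\<in>I. \<Sum>k2\<in>I. \<Sum>k3\<in>I. \<Sum>k4\<in>I. F k1 k2 k3 k4 * (dlt k1 k3 * dlt k2 k4))
        = (\<Sum>k1\<in>I. \<Sum>k2\<in>I. \<Sum>k3\<in>I. \<Sum>k4\<in>I. (F k1 k2 k3 k4 * dlt k1 k3) * dlt k2 k4)"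
      by (simp add: mult.assoc)
    also have "\<dots> = (\<Sum>k1\<in>I. \<Sum>k2\<in>I. \<Sum>k3\<in>I. F k1 k2 k3 k2 * dlt k1 k3)"
      using I by (intro sum.cong refl) (simp add: sum_dlt1)
    also have "\<dots> = (\<Sum>k1\<in>I. \<Sum>k2\<in>I. F k1 k2 k1 k2)"
      using I by (intro sum.cong refl) (simp add: sum_dlt1)
    finally show ?thesis .
  qed
  have t3: "(\<Sum>k1\<in>I. \<Sum>k2\<in>I. \<Sum>k3\<in>I. \<Sum>k4\<in>I. F k1 k2 k3 k4 * (dlt k1 k4 * dlt k2 k3))
      = (\<Sum>k1\<in>I. \<Sum>k2\<in>I. F k1 k2 k2 k1)"
  proof -
    have "(\<Sum>k1\<in>I. \<Sum>k2\<in>I. \<Sum>k3\<in>I. \<Sum>k4\<in>I. F k1 k2 k3 k4 * (dlt k1 k4 * dlt k2 k3))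
        = (\<Sum>k1\<in>I. \<Sum>k2\<in>I. \<Sum>k3\<in>I. \<Sum>k4\<in>I. (F k1 k2 k3 k4 * dlt k2 k3) * dlt k1 k4)"
      by (simp add: mult_ac)
    also have "\<dots> = (\<Sum>k1\<in>I. \<Sum>k2\<in>I. \<Sum>k3\<in>I. F k1 k2 k3 k1 * dlt k2 k3)"
      using I by (intro sum.cong refl) (simp add: sum_dlt1)
    also have "\<dots> = (\<Sum>k1\<in>I. \<Sum>k2\<in>I. F k1 k2 k2 k1)"
      using I by (intro sum.cong refl) (simp add: sum_dlt1)
    finally show ?thesis .
  qed
  show ?thesis
    unfolding distrib_left sum.distrib t1 t2 t3 ..
qed

lemma int_sum1c:
  fixes f :: "'i \<Rightarrow> 'a \<Rightarrow> real"
  assumes "\<And>i. i\<in>I \<Longrightarrow> integrable M (f i)"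
  shows "(\<integral>x. (\<Sum>i\<in>I. c i * f i x) \<partial>M) = (\<Sum>i\<in>I. c i * (\<integral>x. f i x \<partial>M))"
proof -
  have "(\<integral>x. (\<Sum>i\<in>I. c i * f i x) \<partial>M) = (\<Sum>i\<in>I. (\<integral>x. c i * f i x \<partial>M))"
    by (rule Bochner_Integration.integral_sum) (rule Bochner_Integration.integrable_mult_right, rule assms)
  then show ?thesis by simp
qed

lemma int_sum2c:
  fixes f :: "'i \<Rightarrow> 'j \<Rightarrow> 'a \<Rightarrow> real"
  assumes "\<And>i j. i\<in>I \<Longrightarrow> j\<in>J \<Longrightarrow> integrable M (f i j)"
  shows "(\<integral>x. (\<Sum>i\<in>I. \<Sum>j\<in>J. c i j * f i j x) \<partial>M) = (\<Sum>i\<in>I. \<Sum>j\<in>J. c i j * (\<integral>x. f i j x \<partial>M))"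
proof -
  have "(\<integral>x. (\<Sum>i\<in>I. \<Sum>j\<in>J. c i j * f i j x) \<partial>M) = (\<Sum>i\<in>I. (\<integral>x. (\<Sum>j\<in>J. c i j * f i j x) \<partial>M))"
    by (rule Bochner_Integration.integral_sum) (rule Bochner_Integration.integrable_sum, rule Bochner_Integration.integrable_mult_right, rule assms)
  also have "\<dots> = (\<Sum>i\<in>I. \<Sum>j\<in>J. c i j * (\<integral>x. f i j x \<partial>M))"
    by (rule sum.cong[OF refl], rule int_sum1c, rule assms)
  finally show ?thesis .
qed

lemma int_sum3c:
  fixes f :: "'i \<Rightarrow> 'j \<Rightarrow> 'k \<Rightarrow> 'a \<Rightarrow> real"
  assumes "\<And>i j k. i\<in>I \<Longrightarrow> j\<in>J \<Longrightarrow> k\<in>K \<Longrightarrow> integrable M (f i j k)"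
  shows "(\<integral>x. (\<Sum>i\<in>I. \<Sum>j\<in>J. \<Sum>k\<in>K. c i j k * f i j k x) \<partial>M) = (\<Sum>i\<in>I. \<Sum>j\<in>J. \<Sum>k\<in>K. c i j k * (\<integral>x. f i j k x \<partial>M))"
proof -
  have "(\<integral>x. (\<Sum>i\<in>I. \<Sum>j\<in>J. \<Sum>k\<in>K. c i j k * f i j k x) \<partial>M) = (\<Sum>i\<in>I. (\<integral>x. (\<Sum>j\<in>J. \<Sum>k\<in>K. c i j k * f i j k x) \<partial>M))"
    by (rule Bochner_Integration.integral_sum) (rule Bochner_Integration.integrable_sum, rule Bochner_Integration.integrable_sum, rule Bochner_Integration.integrable_mult_right, rule assms)
  also have "\<dots> = (\<Sum>i\<in>I. \<Sum>j\<in>J. \<Sum>k\<in>K. c i j k * (\<integral>x. f i j k x \<partial>M))"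
    by (rule sum.cong[OF refl], rule int_sum2c, rule assms)
  finally show ?thesis .
qed

lemma int_sum4c:
  fixes f :: "'i \<Rightarrow> 'j \<Rightarrow> 'k \<Rightarrow> 'l \<Rightarrow> 'a \<Rightarrow> real"
  assumes "\<And>i j k l. i\<in>I \<Longrightarrow> j\<in>J \<Longrightarrow> k\<in>K \<Longrightarrow> l\<in>L \<Longrightarrow> integrable M (f i j k l)"
  shows "(\<integral>x. (\<Sum>i\<in>I. \<Sum>j\<in>J. \<Sum>k\<in>K. \<Sum>l\<in>L. c i j k l * f i j k l x) \<partial>M) = (\<Sum>i\<in>I. \<Sum>j\<in>J. \<Sum>k\<in>K. \<Sum>l\<in>L. c i j k l * (\<integral>x. f i j k l x \<partial>M))"
proof -
  have "(\<integral>x. (\<Sum>i\<in>I. \<Sum>j\<in>J. \<Sum>k\<in>K. \<Sum>l\<in>L. c i j k l * f i j k l x) \<partial>M) = (\<Sum>i\<in>I. (\<integral>x. (\<Sum>j\<in>J. \<Sum>k\<in>K. \<Sum>l\<in>L. c i j k l * f i j k l x) \<partial>M))"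
    by (rule Bochner_Integration.integral_sum) (rule Bochner_Integration.integrable_sum, rule Bochner_Integration.integrable_sum, rule Bochner_Integration.integrable_sum, rule Bochner_Integration.integrable_mult_right, rule assms)
  also have "\<dots> = (\<Sum>i\<in>I. \<Sum>j\<in>J. \<Sum>k\<in>K. \<Sum>l\<in>L. c i j k l * (\<integral>x. f i j k l x \<partial>M))"
    by (rule sum.cong[OF refl], rule int_sum3c, rule assms)
  finally show ?thesis .
qed

definition Lf :: "nat \<Rightarrow> (nat \<Rightarrow> real) \<Rightarrow> (nat \<Rightarrow> real) \<Rightarrow> real" where
  "Lf d u g = (\<Sum>k<d. u k * g k)"

definition ip :: "nat \<Rightarrow> (nat \<Rightarrow> real) \<Rightarrow> (nat \<Rightarrow> real) \<Rightarrow> real" where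
  "ip d u v = (\<Sum>k<d. u k * v k)"

lemma allmom_std_Lf: "allmom (std_gauss_vec d) (Lf d u)"
  unfolding Lf_def
  by (intro allmom_sum[OF fm_std] allmom_cmult[OF fm_std] allmom_std_coord) auto

lemma int_std_mono2: "integrable (std_gauss_vec d) (\<lambda>g. g k1 * g k2)" if "k1 < d" "k2 < d"
  using that by (intro allmom_integrable allmom_mult allmom_std_coord)

lemma int_std_mono4: "integrable (std_gauss_vec d) (\<lambda>g. g k1 * (g k2 * (g k3 * g k4)))"
  if "k1 < d" "k2 < d" "k3 < d" "k4 < d"
  using that by (intro allmom_integrable allmom_mult allmom_std_coord)

lemma std_L2: "(\<integral>g. Lf d u g * Lf d v g \<partial>std_gauss_vec d) = ip d u v"
proof -
  have "(\<integral>g. Lf d u g * Lf d v g \<partial>std_gauss_vec d)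
      = (\<integral>g. (\<Sum>k1<d. \<Sum>k2<d. (u k1 * v k2) * (g k1 * g k2)) \<partial>std_gauss_vec d)"
    unfolding Lf_def sum_product by (simp add: mult_ac)
  also have "\<dots> = (\<Sum>k1<d. \<Sum>k2<d. (u k1 * v k2) * (\<integral>g. g k1 * g k2 \<partial>std_gauss_vec d))"
    by (rule int_sum2c) (simp add: int_std_mono2)
  also have "\<dots> = (\<Sum>k1<d. \<Sum>k2<d. (u k1 * v k1) * dlt k1 k2)"
    by (intro sum.cong refl) (simp add: std_m2 dlt_def)
  also have "\<dots> = ip d u v"
    unfolding ip_def by (intro sum.cong refl) (simp add: sum_dlt1)
  finally show ?thesis .
qed

lemma dlt_conj: "dlt a b * dlt c e = (if a = b \<and> c = e then 1 else 0)"
  by (simp add: dlt_def)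

lemma std_m4': "a < d \<Longrightarrow> b < d \<Longrightarrow> c < d \<Longrightarrow> e < d \<Longrightarrow>
   (\<integral>g. g a * (g b * (g c * g e)) \<partial>std_gauss_vec d) =
     dlt a b * dlt c e + dlt a c * dlt b e + dlt a e * dlt b c"
  unfolding dlt_conj by (rule std_m4)

lemma sum_prod4:
  fixes A B C D :: "nat \<Rightarrow> real"
  shows "(\<Sum>k1\<in>I. A k1) * ((\<Sum>k2\<in>I. B k2) * ((\<Sum>k3\<in>I. C k3) * (\<Sum>k4\<in>I. D k4)))
     = (\<Sum>k1\<in>I. \<Sum>k2\<in>I. \<Sum>k3\<in>I. \<Sum>k4\<in>I. A k1 * (B k2 * (C k3 * D k4)))"
  by (simp only: sum_product) (simp only: sum_distrib_left)

lemma std_L4: "(\<integral>g. Lf d u g * (Lf d v g * (Lf d w g * Lf d z g)) \<partial>std_gauss_vec d)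
   = ip d u v * ip d w z + ip d u w * ip d v z + ip d u z * ip d v w"
proof -
  have "(\<integral>g. Lf d u g * (Lf d v g * (Lf d w g * Lf d z g)) \<partial>std_gauss_vec d)
      = (\<integral>g. (\<Sum>k1<d. \<Sum>k2<d. \<Sum>k3<d. \<Sum>k4<d. (u k1 * v k2 * w k3 * z k4) * (g k1 * (g k2 * (g k3 * g k4)))) \<partial>std_gauss_vec d)"
    unfolding Lf_def sum_prod4 by (simp add: mult_ac)
  also have "\<dots> = (\<Sum>k1<d. \<Sum>k2<d. \<Sum>k3<d. \<Sum>k4<d. (u k1 * v k2 * w k3 * z k4) * (\<integral>g. g k1 * (g k2 * (g k3 * g k4)) \<partial>std_gauss_vec d))"
    by (rule int_sum4c) (simp add: int_std_mono4)
  also have "\<dots> = (\<Sum>k1<d. \<Sum>k2<d. \<Sum>k3<d. \<Sum>k4<d. (u k1 * v k2 * w k3 * z k4) *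
            (dlt k1 k2 * dlt k3 k4 + dlt k1 k3 * dlt k2 k4 + dlt k1 k4 * dlt k2 k3))"
    by (intro sum.cong refl) (simp add: std_m4')
  also have "\<dots> = ip d u v * ip d w z + ip d u w * ip d v z + ip d u z * ip d v w"
    unfolding E4_collapse[OF finite_lessThan] ip_def sum_product by (simp add: mult_ac)
  finally show ?thesis .
qed


definition Rm :: "nat \<Rightarrow> (nat \<Rightarrow> nat \<Rightarrow> real) \<Rightarrow> (nat \<Rightarrow> real) \<Rightarrow> nat \<Rightarrow> nat \<Rightarrow> real" where
  "Rm d U lam = spectral_mat d U (\<lambda>k. sqrt (lam k))"

definition Tm :: "nat \<Rightarrow> (nat \<Rightarrow> nat \<Rightarrow> real) \<Rightarrow> (nat \<Rightarrow> real) \<Rightarrow> (nat \<Rightarrow> real)" where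
  "Tm d R = (\<lambda>g. restrict (\<lambda>j. \<Sum>k<d. R j k * g k) {..<d})"

lemma meas_lborel_eq: "measurable (PiM I (\<lambda>_. lborel)) N = measurable (PiM I (\<lambda>_. borel)) N"
proof (rule measurable_cong_sets)
  show "sets (PiM I (\<lambda>_. lborel)) = sets (PiM I (\<lambda>_. borel))" by (rule sets_PiM_cong) simp_all
qed (rule refl)

lemma cov_gauss_eq: "cov_gauss d U lam = distr (std_gauss_vec d) (PiM {..<d} (\<lambda>_. lborel)) (Tm d (Rm d U lam))"
  unfolding cov_gauss_def gauss_vec_def Tm_def Rm_def ..

lemma meas_lin: "(\<lambda>g. \<Sum>k<d. R j k * g k) \<in> borel_measurable (std_gauss_vec d)"
proof -
  have "(\<lambda>g. \<Sum>k<d. R j k * g k) \<in> borel_measurable (PiM {..<d} (\<lambda>_. borel))"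
    by (intro borel_measurable_sum borel_measurable_times borel_measurable_const)
       (auto intro: measurable_component_singleton)
  then show ?thesis using measurable_cong_sets[OF sets_std_gauss_vec refl] by blast
qed

lemma Tm_meas: "Tm d R \<in> measurable (std_gauss_vec d) (PiM {..<d} (\<lambda>_. lborel))"
  unfolding Tm_def
  by (rule measurable_restrict) (simp add: measurable_cong_sets[OF refl sets_lborel] meas_lin)

lemma prob_cov: "prob_space (cov_gauss d U lam)"
  unfolding cov_gauss_eq by (rule prob_space.prob_space_distr[OF prob_std_gauss_vec Tm_meas])

lemma sets_cov: "sets (cov_gauss d U lam) = sets (PiM {..<d} (\<lambda>_. borel))"
  unfolding cov_gauss_eq sets_distr by (rule sets_PiM_cong) simp_all

lemma cov_integral:
  fixes f :: "(nat \<Rightarrow> real) \<Rightarrow> real"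
  assumes "f \<in> borel_measurable (PiM {..<d} (\<lambda>_. borel))"
  shows "integral\<^sup>L (cov_gauss d U lam) f = (\<integral>g. f (Tm d (Rm d U lam) g) \<partial>std_gauss_vec d)"
proof -
  have "f \<in> borel_measurable (PiM {..<d} (\<lambda>_. lborel))"
    unfolding meas_lborel_eq by (rule assms)
  then show ?thesis unfolding cov_gauss_eq by (rule integral_distr[OF Tm_meas])
qed

lemma Tm_apply: "a < d \<Longrightarrow> Tm d R g a = Lf d (R a) g"
  unfolding Tm_def Lf_def by simp

lemma coord_meas: "a < d \<Longrightarrow> (\<lambda>x. x a) \<in> borel_measurable (PiM {..<d} (\<lambda>_. borel))"
  by (auto intro: measurable_component_singleton)

lemma allmom_cov_coord: "a < d \<Longrightarrow> allmom (cov_gauss d U lam) (\<lambda>x. x a)"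
  unfolding cov_gauss_eq
proof (rule allmom_distr[OF Tm_meas])
  assume a: "a < d"
  show "(\<lambda>x. x a) \<in> borel_measurable (PiM {..<d} (\<lambda>_. lborel))"
    unfolding meas_lborel_eq by (rule coord_meas[OF a])
  show "allmom (std_gauss_vec d) (\<lambda>x. Tm d (Rm d U lam) x a)"
    using a by (simp add: Tm_apply allmom_std_Lf)
qed

lemma cov_m2: "a < d \<Longrightarrow> b < d \<Longrightarrow>
  (\<integral>x. x a * x b \<partial>cov_gauss d U lam) = ip d (Rm d U lam a) (Rm d U lam b)"
  by (subst cov_integral) (auto intro: borel_measurable_times coord_meas simp: Tm_apply std_L2)

lemma cov_m4: "a < d \<Longrightarrow> b < d \<Longrightarrow> c < d \<Longrightarrow> e < d \<Longrightarrow>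
  (\<integral>x. x a * (x b * (x c * x e)) \<partial>cov_gauss d U lam) =
    ip d (Rm d U lam a) (Rm d U lam b) * ip d (Rm d U lam c) (Rm d U lam e)
  + ip d (Rm d U lam a) (Rm d U lam c) * ip d (Rm d U lam b) (Rm d U lam e)
  + ip d (Rm d U lam a) (Rm d U lam e) * ip d (Rm d U lam b) (Rm d U lam c)"
  by (subst cov_integral) (auto intro: borel_measurable_times coord_meas simp: Tm_apply std_L4)

definition Mi :: "nat \<Rightarrow> nat \<Rightarrow> (nat \<Rightarrow> nat \<Rightarrow> real) \<Rightarrow> (nat \<Rightarrow> real) \<Rightarrow> nat \<Rightarrow> (nat \<Rightarrow> real) measure" where
  "Mi d n U lam = (\<lambda>i. if i \<le> n then cov_gauss d U lam else std_gauss_vec d)"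

lemma DM_eq: "data_measure d n U lam = PiM {..n+1} (Mi d n U lam)"
  unfolding data_measure_def Mi_def ..

lemma prob_Mi: "prob_space (Mi d n U lam i)"
  unfolding Mi_def by (simp add: prob_cov prob_std_gauss_vec)

lemma prob_DM: "prob_space (data_measure d n U lam)"
  unfolding DM_eq by (intro prob_space_PiM prob_Mi)

lemma fm_DM: "finite_measure (data_measure d n U lam)"
  by (rule prob_fm[OF prob_DM])

lemma sets_Mi: "sets (Mi d n U lam i) = sets (PiM {..<d} (\<lambda>_. borel))"
  unfolding Mi_def by (simp add: sets_cov sets_std_gauss_vec)

lemma allmom_Mi_coord: "a < d \<Longrightarrow> allmom (Mi d n U lam i) (\<lambda>x. x a)"
  unfolding Mi_def by (simp add: allmom_cov_coord allmom_std_coord)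

lemma allmom_DM_coord: "i \<le> n + 1 \<Longrightarrow> a < d \<Longrightarrow> allmom (data_measure d n U lam) (\<lambda>\<omega>. \<omega> i a)"
  unfolding DM_eq
  by (rule allmom_component[where f="\<lambda>x. x a", OF prob_Mi]) (auto intro: allmom_Mi_coord)

lemma allmom_prod_list:
  assumes "finite_measure M" "\<And>a. a \<in> set as \<Longrightarrow> allmom M (\<lambda>x. x a)"
  shows "allmom M (\<lambda>x. \<Prod>a\<leftarrow>as. x a)"
  using assms(2)
proof (induction as)
  case Nil then show ?case using allmom_const[OF assms(1), of 1] by simp
next
  case (Cons a as)
  have "allmom M (\<lambda>x. x a * (\<Prod>a\<leftarrow>as. x a))"
    by (rule allmom_mult) (use Cons in auto)
  then show ?case by simp
qed

interpretation dmp: product_sigma_finite "Mi d n U lam"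
  unfolding product_sigma_finite_def using prob_space_imp_sigma_finite[OF prob_Mi] by simp

definition monoL :: "(nat \<times> nat) list \<Rightarrow> (nat \<Rightarrow> nat \<Rightarrow> real) \<Rightarrow> real" where
  "monoL L \<omega> = (\<Prod>p\<leftarrow>L. \<omega> (fst p) (snd p))"

definition compL :: "(nat \<times> nat) list \<Rightarrow> nat \<Rightarrow> (nat \<Rightarrow> real) \<Rightarrow> real" where
  "compL L i x = (\<Prod>a\<leftarrow>map snd (filter (\<lambda>p. fst p = i) L). x a)"

lemma monoL_split:
  assumes "finite I" "fst ` set L \<subseteq> I"
  shows "monoL L \<omega> = (\<Prod>i\<in>I. compL L i (\<omega> i))"
  using assms(2)
proof (induction L)
  case Nil then show ?case by (simp add: monoL_def compL_def)
next
  case (Cons p L)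
  have "(\<Prod>i\<in>I. compL (p # L) i (\<omega> i)) = (\<Prod>i\<in>I. compL L i (\<omega> i) * (if i = fst p then \<omega> (fst p) (snd p) else 1))"
    by (intro prod.cong refl) (auto simp: compL_def mult.commute)
  also have "\<dots> = (\<Prod>i\<in>I. compL L i (\<omega> i)) * \<omega> (fst p) (snd p)"
    using Cons.prems assms(1) by (simp add: prod.distrib prod.delta')
  finally show ?case using Cons by (simp add: monoL_def mult.commute)
qed

lemma int_compL: "set L \<subseteq> {..n+1} \<times> {..<d} \<Longrightarrow> integrable (Mi d n U lam i) (compL L i)"
  unfolding compL_def
  by (intro allmom_integrable allmom_prod_list prob_fm[OF prob_Mi] allmom_Mi_coord) auto

lemma integral_monoL:
  assumes "set L \<subseteq> {..n+1} \<times> {..<d}"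
  shows "(\<integral>\<omega>. monoL L \<omega> \<partial>data_measure d n U lam) = (\<Prod>i\<in>fst ` set L. integral\<^sup>L (Mi d n U lam i) (compL L i))"
proof -
  have sub: "fst ` set L \<subseteq> {..n+1}" using assms by auto
  have "(\<integral>\<omega>. monoL L \<omega> \<partial>data_measure d n U lam) = (\<integral>\<omega>. (\<Prod>i\<in>{..n+1}. compL L i (\<omega> i)) \<partial>PiM {..n+1} (Mi d n U lam))"
    unfolding DM_eq using monoL_split[OF _ sub] by simp
  also have "\<dots> = (\<Prod>i\<in>{..n+1}. integral\<^sup>L (Mi d n U lam i) (compL L i))"
    by (rule dmp.product_integral_prod) (auto intro: int_compL[OF assms])
  also have "\<dots> = (\<Prod>i\<in>fst ` set L. integral\<^sup>L (Mi d n U lam i) (compL L i))"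
  proof (rule prod.mono_neutral_right)
    show "\<forall>i\<in>{..n + 1} - fst ` set L. integral\<^sup>L (Mi d n U lam i) (compL L i) = 1"
    proof
      fix i assume "i \<in> {..n + 1} - fst ` set L"
      then have "filter (\<lambda>p. fst p = i) L = []" by (auto simp: filter_empty_conv)
      then have "compL L i = (\<lambda>x. 1)" by (intro ext) (simp add: compL_def)
      then show "integral\<^sup>L (Mi d n U lam i) (compL L i) = 1"
        using prob_space.prob_space[OF prob_Mi] by (simp add: measure_def prob_space.emeasure_space_1[OF prob_Mi])
    qed
  qed (use sub in auto)
  finally show ?thesis .
qed

lemma allmom_monoL: "set L \<subseteq> {..n+1} \<times> {..<d} \<Longrightarrow> allmom (data_measure d n U lam) (monoL L)"
  unfolding monoL_def
proof (induction L)
  case Nil then show ?case using allmom_const[OF fm_DM[of d n U lam], of 1] by simp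
next
  case (Cons p L)
  then have "allmom (data_measure d n U lam) (\<lambda>\<omega>. \<omega> (fst p) (snd p) * (\<Prod>p\<leftarrow>L. \<omega> (fst p) (snd p)))"
    by (intro allmom_mult allmom_DM_coord) auto
  then show ?case by simp
qed


lemma spec_sym: "spectral_mat d U x a b = spectral_mat d U x b a"
  unfolding spectral_mat_def by (simp add: mult_ac)

lemma spec_cong: "(\<And>t. t < d \<Longrightarrow> x t = y t) \<Longrightarrow> spectral_mat d U x a b = spectral_mat d U y a b"
  unfolding spectral_mat_def by (intro sum.cong) auto

lemma spec_lin: "spectral_mat d U (\<lambda>t. \<alpha> * x t + \<beta> * y t) a b = \<alpha> * spectral_mat d U x a b + \<beta> * spectral_mat d U y a b"
  unfolding spectral_mat_def by (simp add: sum_distrib_left sum.distrib algebra_simps)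

lemma spec_mult:
  assumes orth: "\<And>i j. i < d \<Longrightarrow> j < d \<Longrightarrow> (\<Sum>k<d. U i k * U j k) = (if i = j then 1 else 0)"
  shows "(\<Sum>j<d. spectral_mat d U x a j * spectral_mat d U y j b) = spectral_mat d U (\<lambda>t. x t * y t) a b"
proof -
  have oc: "(\<Sum>j<d. U j t * U j t') = dlt t t'" if "t < d" "t' < d" for t t'
    using orth_cols[of d U t t', OF orth] that by (simp add: dlt_def)
  have "(\<Sum>j<d. spectral_mat d U x a j * spectral_mat d U y j b)
      = (\<Sum>j<d. \<Sum>t<d. \<Sum>t'<d. (U a t * x t * y t' * U b t') * (U j t * U j t'))"
    unfolding spectral_mat_def sum_product by (simp add: mult_ac)
  also have "\<dots> = (\<Sum>t<d. \<Sum>j<d. \<Sum>t'<d. (U a t * x t * y t' * U b t') * (U j t * U j t'))"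
    by (rule sum.swap)
  also have "\<dots> = (\<Sum>t<d. \<Sum>t'<d. \<Sum>j<d. (U a t * x t * y t' * U b t') * (U j t * U j t'))"
    by (rule sum.cong[OF refl], rule sum.swap)
  also have "\<dots> = (\<Sum>t<d. \<Sum>t'<d. (U a t * x t * y t' * U b t') * dlt t t')"
    by (intro sum.cong refl) (simp add: sum_distrib_left[symmetric] oc)
  also have "\<dots> = (\<Sum>t<d. U a t * x t * y t * U b t)"
    by (rule sum.cong[OF refl]) (simp add: sum_dlt1)
  finally show ?thesis unfolding spectral_mat_def by (simp add: mult_ac)
qed

lemma spec_trace:
  assumes orth: "\<And>i j. i < d \<Longrightarrow> j < d \<Longrightarrow> (\<Sum>k<d. U i k * U j k) = (if i = j then 1 else 0)"
  shows "(\<Sum>i<d. spectral_mat d U x i i) = (\<Sum>t<d. x t)"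
proof -
  have "(\<Sum>i<d. spectral_mat d U x i i) = (\<Sum>t<d. x t * (\<Sum>i<d. U i t * U i t))"
    unfolding spectral_mat_def by (subst sum.swap) (simp add: sum_distrib_left mult_ac)
  also have "\<dots> = (\<Sum>t<d. x t)"
    by (intro sum.cong refl) (simp add: orth_cols[of d U, OF orth])
  finally show ?thesis .
qed

lemma ip_Rm:
  assumes orth: "\<And>i j. i < d \<Longrightarrow> j < d \<Longrightarrow> (\<Sum>k<d. U i k * U j k) = (if i = j then 1 else 0)"
    and lam_nonneg: "\<And>i. i < d \<Longrightarrow> lam i \<ge> 0"
  shows "ip d (Rm d U lam a) (Rm d U lam b) = spectral_mat d U lam a b"
proof -
  have "ip d (Rm d U lam a) (Rm d U lam b) = (\<Sum>j<d. spectral_mat d U (\<lambda>k. sqrt (lam k)) a j * spectral_mat d U (\<lambda>k. sqrt (lam k)) j b)"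
    unfolding ip_def Rm_def by (simp add: spec_sym[of d U _ b])
  also have "\<dots> = spectral_mat d U (\<lambda>t. sqrt (lam t) * sqrt (lam t)) a b"
    by (rule spec_mult[OF orth])
  also have "\<dots> = spectral_mat d U lam a b"
    by (rule spec_cong) (simp add: lam_nonneg)
  finally show ?thesis .
qed

definition pred :: "nat \<Rightarrow> nat \<Rightarrow> (nat \<Rightarrow> real) \<Rightarrow> (nat \<Rightarrow> nat \<Rightarrow> real) \<Rightarrow> (nat \<Rightarrow> nat \<Rightarrow> real) \<Rightarrow> real" where
  "pred d n b A \<omega> = (1 / real n) * (\<Sum>l<n. (\<Sum>m<d+1. b m * Z0 d n \<omega> m l) * (\<Sum>p<d. \<Sum>q<d+1. Z0 d n \<omega> q l * A q p * \<omega> n p))"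

lemma Z1_pred: "Z1 d n b A \<omega> d n = pred d n b A \<omega>"
proof -
  define Z where "Z = Z0 d n \<omega>"
  have Zdn: "Z d n = 0" unfolding Z_def Z0_def by simp
  have Zpn: "Z p n = (if p < d then \<omega> n p else 0)" for p unfolding Z_def Z0_def by simp
  have Mm: "(\<Sum>t<n+1. X t * Mmask n t l) = (if l < n then X l else 0)" for X :: "nat \<Rightarrow> real" and l
  proof -
    have "(\<Sum>t<n+1. X t * Mmask n t l) = (\<Sum>t<n+1. if t = l then (if l < n then X l else 0) else 0)"
      by (intro sum.cong refl) (auto simp: Mmask_def)
    also have "\<dots> = (if l < n then X l else 0)" by (simp add: sum.delta')
    finally show ?thesis .
  qed
  have G: "(\<Sum>p<d+1. (\<Sum>q<d+1. Z q l * Qmat d A q p) * Z p n) = (\<Sum>p<d. \<Sum>q<d+1. Z q l * A q p * \<omega> n p)" for l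
  proof -
    have "(\<Sum>p<d+1. (\<Sum>q<d+1. Z q l * Qmat d A q p) * Z p n) = (\<Sum>p<d. (\<Sum>q<d+1. Z q l * Qmat d A q p) * Z p n)"
      by (simp add: Zpn)
    also have "\<dots> = (\<Sum>p<d. \<Sum>q<d+1. Z q l * A q p * \<omega> n p)"
      by (intro sum.cong refl) (simp add: Zpn Qmat_def sum_distrib_right distrib_right)
    finally show ?thesis .
  qed
  have "Z1 d n b A \<omega> d n = (1 / real n) * (\<Sum>l<n+1. (\<Sum>t<n+1. (\<Sum>m<d+1. b m * Z m t) * Mmask n t l) *
          (\<Sum>p<d+1. (\<Sum>q<d+1. Z q l * Qmat d A q p) * Z p n))"
    unfolding Z1_def Let_def mat_mult_def mat_transpose_def Pmat_def Z_def[symmetric] by (simp add: Zdn)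
  also have "\<dots> = (1 / real n) * (\<Sum>l<n+1. (if l < n then (\<Sum>m<d+1. b m * Z m l) else 0) *
          (\<Sum>p<d. \<Sum>q<d+1. Z q l * A q p * \<omega> n p))"
    by (simp only: Mm G)
  also have "\<dots> = pred d n b A \<omega>"
    unfolding pred_def Z_def by simp
  finally show ?thesis .
qed

lemma pred_scale:
  assumes g: "\<gamma> \<noteq> 0"
  shows "pred d n (\<lambda>j. \<gamma> * b j) (\<lambda>i j. A i j / \<gamma>) \<omega> = pred d n b A \<omega>"
proof -
  have X: "(\<Sum>m<d+1. \<gamma> * b m * Z0 d n \<omega> m l) = \<gamma> * (\<Sum>m<d+1. b m * Z0 d n \<omega> m l)" for l
    by (simp only: sum_distrib_left mult.assoc)
  have Y: "(\<Sum>p<d. \<Sum>q<d+1. Z0 d n \<omega> q l * (A q p / \<gamma>) * \<omega> n p)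
       = (1/\<gamma>) * (\<Sum>p<d. \<Sum>q<d+1. Z0 d n \<omega> q l * A q p * \<omega> n p)" for l
    by (simp only: sum_distrib_left) (intro sum.cong refl, simp)
  have "(\<gamma> * P) * ((1/\<gamma>) * Q) = P * Q" for P Q :: real using g by simp
  then show ?thesis unfolding pred_def X Y by simp
qed

lemma pred_expand:
  "pred d n b A \<omega> = (1 / real n) * (\<Sum>l<n. \<Sum>m<d+1. \<Sum>p<d. \<Sum>q<d+1. (b m * A q p) * (Z0 d n \<omega> m l * Z0 d n \<omega> q l * \<omega> n p))"
proof -
  have "(\<Sum>m<d+1. b m * Z0 d n \<omega> m l) * (\<Sum>p<d. \<Sum>q<d+1. Z0 d n \<omega> q l * A q p * \<omega> n p)
     = (\<Sum>m<d+1. \<Sum>p<d. \<Sum>q<d+1. (b m * A q p) * (Z0 d n \<omega> m l * Z0 d n \<omega> q l * \<omega> n p))" for l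
    apply (subst sum_distrib_right)
    apply (rule sum.cong[OF refl])
    apply (simp only: sum_distrib_left)
    apply (intro sum.cong refl)
    apply (simp only: mult_ac)
    done
  then show ?thesis unfolding pred_def by simp
qed


lemma compL_eq: "compL L i = (\<lambda>x. \<Prod>a\<leftarrow>map snd (filter (\<lambda>p. fst p = i) L). x a)"
  by (rule ext) (simp add: compL_def)

lemma Mi_cov: "i \<le> n \<Longrightarrow> Mi d n U lam i = cov_gauss d U lam"
  unfolding Mi_def by simp

lemma Mi_W: "Mi d n U lam (Suc n) = std_gauss_vec d"
  unfolding Mi_def by simp

lemma w1: "a < d \<Longrightarrow> integral\<^sup>L (Mi d n U lam (Suc n)) (\<lambda>x. x a) = 0"
  by (simp add: Mi_W std_m1)

lemma w2: "a < d \<Longrightarrow> b < d \<Longrightarrow> integral\<^sup>L (Mi d n U lam (Suc n)) (\<lambda>x. x a * x b) = dlt a b"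
  by (simp add: Mi_W std_m2 dlt_def)

lemma w3: "a < d \<Longrightarrow> b < d \<Longrightarrow> c < d \<Longrightarrow> integral\<^sup>L (Mi d n U lam (Suc n)) (\<lambda>x. x a * (x b * x c)) = 0"
  by (simp add: Mi_W std_m3)

lemma monoL_zero:
  assumes "set L \<subseteq> {..n+1} \<times> {..<d}" "ii \<in> fst ` set L" "integral\<^sup>L (Mi d n U lam ii) (compL L ii) = 0"
  shows "(\<integral>\<omega>. monoL L \<omega> \<partial>data_measure d n U lam) = 0"
  unfolding integral_monoL[OF assms(1)] using assms(2,3)
  by (intro prod_zero) auto

lemma int_monoL[simp]: "set L \<subseteq> {..n+1} \<times> {..<d} \<Longrightarrow> integrable (data_measure d n U lam) (monoL L)"
  by (rule allmom_integrable[OF allmom_monoL])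

definition cc :: "nat \<Rightarrow> nat \<Rightarrow> (nat \<Rightarrow> real) \<Rightarrow> nat \<Rightarrow> real" where
  "cc d n lam t = 1 / ((real n + 1) / real n * lam t + (1 / real n) * (\<Sum>m<d. lam m))"

definition h1 :: "nat \<Rightarrow> nat \<Rightarrow> (nat \<Rightarrow> nat \<Rightarrow> real) \<Rightarrow> real" where
  "h1 d n \<omega> = (\<Sum>r<d. \<omega> n r * \<omega> (Suc n) r)"

definition h2 :: "nat \<Rightarrow> nat \<Rightarrow> (nat \<Rightarrow> nat \<Rightarrow> real) \<Rightarrow> (nat \<Rightarrow> real) \<Rightarrow> (nat \<Rightarrow> nat \<Rightarrow> real) \<Rightarrow> real" where
  "h2 d n U lam \<omega> = (\<Sum>k<n. \<Sum>j<d. \<Sum>r<d. \<Sum>a<d. spectral_mat d U (cc d n lam) a r * (\<omega> n r * (\<omega> k j * (\<omega> (Suc n) j * \<omega> k a))))"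

definition hS :: "nat \<Rightarrow> nat \<Rightarrow> (nat \<Rightarrow> nat \<Rightarrow> real) \<Rightarrow> (nat \<Rightarrow> real) \<Rightarrow> (nat \<Rightarrow> nat \<Rightarrow> real) \<Rightarrow> real" where
  "hS d n U lam \<omega> = h1 d n \<omega> - (1 / real n) * h2 d n U lam \<omega>"

lemma mult_h1: "X * h1 d n \<omega> = (\<Sum>r<d. X * (\<omega> n r * \<omega> (Suc n) r))"
  unfolding h1_def by (rule sum_distrib_left)

lemma mult_h2: "X * h2 d n U lam \<omega> = (\<Sum>k<n. \<Sum>j<d. \<Sum>r<d. \<Sum>a<d. spectral_mat d U (cc d n lam) a r * (X * (\<omega> n r * (\<omega> k j * (\<omega> (Suc n) j * \<omega> k a)))))"
  unfolding h2_def by (simp add: sum_distrib_left mult_ac)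

lemma sum_if_l: "l < n \<Longrightarrow> (\<Sum>k<n. if k = l then (X::real) else Y) = X + (real n - 1) * Y"
proof -
  assume l: "l < n"
  have "(\<Sum>k<n. if k = l then X else Y) = (\<Sum>k<n. (if k = l then X - Y else 0) + Y)"
    by (intro sum.cong refl) auto
  also have "\<dots> = (X - Y) + real n * Y" using l by (simp add: sum.distrib sum.delta')
  finally show ?thesis by (simp add: algebra_simps)
qed

lemma int_diff_zero:
  fixes A B :: "'a \<Rightarrow> real"
  assumes "integrable M A" "integrable M B" "integral\<^sup>L M A = 0" "integral\<^sup>L M B = 0"
  shows "(\<integral>x. A x - c * B x \<partial>M) = 0"
  using assms by (simp add: Bochner_Integration.integral_diff)

lemma int_sum1_zero:
  fixes f :: "'i \<Rightarrow> 'a \<Rightarrow> real"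
  assumes "\<And>i. i \<in> I \<Longrightarrow> integrable M (f i)" "\<And>i. i \<in> I \<Longrightarrow> integral\<^sup>L M (f i) = 0"
  shows "integrable M (\<lambda>x. \<Sum>i\<in>I. f i x)" "(\<integral>x. (\<Sum>i\<in>I. f i x) \<partial>M) = 0"
proof -
  show "integrable M (\<lambda>x. \<Sum>i\<in>I. f i x)" by (rule Bochner_Integration.integrable_sum) (rule assms)
  have "(\<integral>x. (\<Sum>i\<in>I. f i x) \<partial>M) = (\<Sum>i\<in>I. integral\<^sup>L M (f i))"
    by (rule Bochner_Integration.integral_sum) (rule assms)
  then show "(\<integral>x. (\<Sum>i\<in>I. f i x) \<partial>M) = 0" using assms(2) by simp
qed

lemma int_cmult_zero:
  fixes f :: "'a \<Rightarrow> real"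
  assumes "integrable M f" "integral\<^sup>L M f = 0"
  shows "integrable M (\<lambda>x. c * f x)" "(\<integral>x. c * f x \<partial>M) = 0"
  using assms by simp_all

context
  fixes d n :: nat and U :: "nat \<Rightarrow> nat \<Rightarrow> real" and lam :: "nat \<Rightarrow> real"
  assumes n1: "n \<ge> 1"
    and orth: "\<And>i j. i < d \<Longrightarrow> j < d \<Longrightarrow> (\<Sum>k<d. U i k * U j k) = (if i = j then 1 else 0)"
    and lam_nonneg: "\<And>i. i < d \<Longrightarrow> lam i \<ge> 0"
begin

abbreviation S :: "nat \<Rightarrow> nat \<Rightarrow> real" where "S \<equiv> spectral_mat d U lam"

lemma m2c: "i \<le> n \<Longrightarrow> a < d \<Longrightarrow> b < d \<Longrightarrow> integral\<^sup>L (Mi d n U lam i) (\<lambda>x. x a * x b) = S a b"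
  by (simp add: Mi_cov cov_m2 ip_Rm[OF orth lam_nonneg])

lemma m4c: "i \<le> n \<Longrightarrow> a < d \<Longrightarrow> b < d \<Longrightarrow> c < d \<Longrightarrow> e < d \<Longrightarrow>
   integral\<^sup>L (Mi d n U lam i) (\<lambda>x. x a * (x b * (x c * x e))) = S a b * S c e + S a c * S b e + S a e * S b c"
  by (simp add: Mi_cov cov_m4 ip_Rm[OF orth lam_nonneg])

lemma evB1:
  assumes "l < n" "m < d" "i < d" "p < d" "r < d"
  shows "(\<integral>\<omega>. monoL [(l,m),(l,i),(Suc n,i),(n,p),(n,r),(Suc n,r)] \<omega> \<partial>data_measure d n U lam)
     = S m i * (dlt i r * S p r)"
proof -
  have f: "l \<noteq> n" "n \<noteq> l" "l \<noteq> Suc n" "Suc n \<noteq> l" "l \<le> n" using assms by auto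
  show ?thesis
    by (subst integral_monoL) (use assms f in \<open>auto simp: compL_eq m2c w2 insert_commute mult_ac spec_sym[of d U lam]\<close>)
qed

lemma evB2_eq:
  assumes "l < n" "m < d" "i < d" "p < d" "r < d" "j < d" "a < d"
  shows "(\<integral>\<omega>. monoL [(l,m),(l,i),(Suc n,i),(n,p),(n,r),(l,j),(Suc n,j),(l,a)] \<omega> \<partial>data_measure d n U lam)
     = (S m i * S j a + S m j * S i a + S m a * S i j) * (dlt i j * S p r)"
proof -
  have f: "l \<noteq> n" "n \<noteq> l" "l \<noteq> Suc n" "Suc n \<noteq> l" "l \<le> n" using assms by auto
  show ?thesis
    by (subst integral_monoL) (use assms f in \<open>auto simp: compL_eq m4c m2c w2 insert_commute mult_ac spec_sym[of d U lam]\<close>)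
qed

lemma evB2_ne:
  assumes "l < n" "k < n" "k \<noteq> l" "m < d" "i < d" "p < d" "r < d" "j < d" "a < d"
  shows "(\<integral>\<omega>. monoL [(l,m),(l,i),(Suc n,i),(n,p),(n,r),(k,j),(Suc n,j),(k,a)] \<omega> \<partial>data_measure d n U lam)
     = S m i * (dlt i j * (S p r * S j a))"
proof -
  have f: "l \<noteq> n" "n \<noteq> l" "l \<noteq> Suc n" "Suc n \<noteq> l" "l \<le> n" "k \<noteq> n" "n \<noteq> k" "k \<noteq> Suc n" "Suc n \<noteq> k" "k \<le> n" "l \<noteq> k"
    using assms by auto
  show ?thesis
    by (subst integral_monoL) (use assms f in \<open>auto simp: compL_eq m2c w2 insert_commute mult_ac spec_sym[of d U lam]\<close>)
qed

abbreviation CC :: "nat \<Rightarrow> nat \<Rightarrow> real" where "CC \<equiv> spectral_mat d U (cc d n lam)"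

lemma evB2:
  assumes "l < n" "k < n" "m < d" "i < d" "p < d" "r < d" "j < d" "a < d"
  shows "(\<integral>\<omega>. monoL [(l,m),(l,i),(Suc n,i),(n,p),(n,r),(k,j),(Suc n,j),(k,a)] \<omega> \<partial>data_measure d n U lam)
     = (if k = l then (S m i * S j a + S m j * S i a + S m a * S i j) * (dlt i j * S p r)
        else S m i * (dlt i j * (S p r * S j a)))"
  using evB2_eq[of l m i p r j a] evB2_ne[of l k m i p r j a] assms by auto

lemma zA1: "l < n \<Longrightarrow> m < d \<Longrightarrow> q < d \<Longrightarrow> p < d \<Longrightarrow> r < d \<Longrightarrow>
  (\<integral>\<omega>. monoL [(l,m),(l,q),(n,p),(n,r),(Suc n,r)] \<omega> \<partial>data_measure d n U lam) = 0"
  by (rule monoL_zero[where ii="Suc n"]) (auto simp: compL_eq w1)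

lemma zA2: "l < n \<Longrightarrow> k < n \<Longrightarrow> m < d \<Longrightarrow> q < d \<Longrightarrow> p < d \<Longrightarrow> r < d \<Longrightarrow> j < d \<Longrightarrow> a < d \<Longrightarrow>
  (\<integral>\<omega>. monoL [(l,m),(l,q),(n,p),(n,r),(k,j),(Suc n,j),(k,a)] \<omega> \<partial>data_measure d n U lam) = 0"
  by (rule monoL_zero[where ii="Suc n"]) (auto simp: compL_eq w1)

lemma zD1: "l < n \<Longrightarrow> i < d \<Longrightarrow> i' < d \<Longrightarrow> p < d \<Longrightarrow> r < d \<Longrightarrow>
  (\<integral>\<omega>. monoL [(l,i),(Suc n,i),(l,i'),(Suc n,i'),(n,p),(n,r),(Suc n,r)] \<omega> \<partial>data_measure d n U lam) = 0"
  by (rule monoL_zero[where ii="Suc n"]) (auto simp: compL_eq w3)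

lemma zD2: "l < n \<Longrightarrow> k < n \<Longrightarrow> i < d \<Longrightarrow> i' < d \<Longrightarrow> p < d \<Longrightarrow> r < d \<Longrightarrow> j < d \<Longrightarrow> a < d \<Longrightarrow>
  (\<integral>\<omega>. monoL [(l,i),(Suc n,i),(l,i'),(Suc n,i'),(n,p),(n,r),(k,j),(Suc n,j),(k,a)] \<omega> \<partial>data_measure d n U lam) = 0"
  by (rule monoL_zero[where ii="Suc n"]) (auto simp: compL_eq w3)

lemma keyA:
  assumes "l < n" "m < d" "q < d" "p < d"
  shows "(\<integral>\<omega>. (\<omega> l m * \<omega> l q * \<omega> n p) * hS d n U lam \<omega> \<partial>data_measure d n U lam) = 0"
proof -
  have e1: "(\<omega> l m * \<omega> l q * \<omega> n p) * h1 d n \<omega> = (\<Sum>r<d. monoL [(l,m),(l,q),(n,p),(n,r),(Suc n,r)] \<omega>)" for \<omega>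
    unfolding mult_h1 by (simp add: monoL_def mult_ac)
  have e2: "(\<omega> l m * \<omega> l q * \<omega> n p) * h2 d n U lam \<omega> =
     (\<Sum>k<n. \<Sum>j<d. \<Sum>r<d. \<Sum>a<d. CC a r * monoL [(l,m),(l,q),(n,p),(n,r),(k,j),(Suc n,j),(k,a)] \<omega>)" for \<omega>
    unfolding mult_h2 by (simp add: monoL_def mult_ac)
  have pt: "(\<omega> l m * \<omega> l q * \<omega> n p) * hS d n U lam \<omega> =
     (\<Sum>r<d. monoL [(l,m),(l,q),(n,p),(n,r),(Suc n,r)] \<omega>)
     - (1 / real n) * (\<Sum>k<n. \<Sum>j<d. \<Sum>r<d. \<Sum>a<d. CC a r * monoL [(l,m),(l,q),(n,p),(n,r),(k,j),(Suc n,j),(k,a)] \<omega>)" for \<omega>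
    unfolding e1[symmetric] e2[symmetric] hS_def by (simp add: algebra_simps)
  show ?thesis unfolding pt
    by (rule int_diff_zero; (intro int_sum1_zero int_cmult_zero int_monoL zA1 zA2)?) (use assms in auto)
qed

lemma keyD:
  assumes "l < n" "p < d"
  shows "(\<integral>\<omega>. (Z0 d n \<omega> d l * Z0 d n \<omega> d l * \<omega> n p) * hS d n U lam \<omega> \<partial>data_measure d n U lam) = 0"
proof -
  have psi: "Z0 d n \<omega> d l * Z0 d n \<omega> d l * \<omega> n p = (\<Sum>i<d. \<Sum>i'<d. \<omega> l i * (\<omega> (Suc n) i * (\<omega> l i' * (\<omega> (Suc n) i' * \<omega> n p))))" for \<omega>
  proof -
    have z: "Z0 d n \<omega> d l = (\<Sum>i<d. \<omega> l i * \<omega> (Suc n) i)" using assms by (simp add: Z0_def)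
    have "Z0 d n \<omega> d l * Z0 d n \<omega> d l * \<omega> n p = (\<Sum>i<d. \<Sum>i'<d. (\<omega> l i * \<omega> (Suc n) i) * (\<omega> l i' * \<omega> (Suc n) i')) * \<omega> n p"
      by (simp only: z sum_product)
    also have "\<dots> = (\<Sum>i<d. \<Sum>i'<d. (\<omega> l i * \<omega> (Suc n) i) * (\<omega> l i' * \<omega> (Suc n) i') * \<omega> n p)"
      by (simp only: sum_distrib_right)
    also have "\<dots> = (\<Sum>i<d. \<Sum>i'<d. \<omega> l i * (\<omega> (Suc n) i * (\<omega> l i' * (\<omega> (Suc n) i' * \<omega> n p))))"
      by (intro sum.cong refl) (simp only: mult_ac)
    finally show ?thesis .
  qed
  have e1: "(Z0 d n \<omega> d l * Z0 d n \<omega> d l * \<omega> n p) * h1 d n \<omega> =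
      (\<Sum>r<d. \<Sum>i<d. \<Sum>i'<d. monoL [(l,i),(Suc n,i),(l,i'),(Suc n,i'),(n,p),(n,r),(Suc n,r)] \<omega>)" for \<omega>
    unfolding mult_h1 psi by (simp add: monoL_def sum_distrib_right sum_distrib_left mult_ac)
  have e2: "(Z0 d n \<omega> d l * Z0 d n \<omega> d l * \<omega> n p) * h2 d n U lam \<omega> =
     (\<Sum>k<n. \<Sum>j<d. \<Sum>r<d. \<Sum>a<d. CC a r * (\<Sum>i<d. \<Sum>i'<d. monoL [(l,i),(Suc n,i),(l,i'),(Suc n,i'),(n,p),(n,r),(k,j),(Suc n,j),(k,a)] \<omega>))" for \<omega>
    unfolding mult_h2 psi by (simp add: monoL_def sum_distrib_right sum_distrib_left mult_ac)
  have pt: "(Z0 d n \<omega> d l * Z0 d n \<omega> d l * \<omega> n p) * hS d n U lam \<omega> =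
      (\<Sum>r<d. \<Sum>i<d. \<Sum>i'<d. monoL [(l,i),(Suc n,i),(l,i'),(Suc n,i'),(n,p),(n,r),(Suc n,r)] \<omega>)
     - (1 / real n) * (\<Sum>k<n. \<Sum>j<d. \<Sum>r<d. \<Sum>a<d. CC a r * (\<Sum>i<d. \<Sum>i'<d. monoL [(l,i),(Suc n,i),(l,i'),(Suc n,i'),(n,p),(n,r),(k,j),(Suc n,j),(k,a)] \<omega>))" for \<omega>
    unfolding e1[symmetric] e2[symmetric] hS_def by (simp add: algebra_simps)
  show ?thesis unfolding pt
    by (rule int_diff_zero; (intro int_sum1_zero int_cmult_zero int_monoL zD1 zD2)?) (use assms in auto)
qed

end


lemma int_sum2_eq:
  fixes f :: "'i \<Rightarrow> 'j \<Rightarrow> 'a \<Rightarrow> real"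
  assumes "\<And>i j. i\<in>I \<Longrightarrow> j\<in>J \<Longrightarrow> integrable M (f i j)"
  shows "(\<integral>x. (\<Sum>i\<in>I. \<Sum>j\<in>J. f i j x) \<partial>M) = (\<Sum>i\<in>I. \<Sum>j\<in>J. integral\<^sup>L M (f i j))"
  using int_sum2c[of I J M f "\<lambda>_ _. 1"] assms by simp

context
  fixes d n :: nat and U :: "nat \<Rightarrow> nat \<Rightarrow> real" and lam :: "nat \<Rightarrow> real"
  assumes n1: "n \<ge> 1"
    and orth: "\<And>i j. i < d \<Longrightarrow> j < d \<Longrightarrow> (\<Sum>k<d. U i k * U j k) = (if i = j then 1 else 0)"
    and lam_nonneg: "\<And>i. i < d \<Longrightarrow> lam i \<ge> 0"
begin

abbreviation S7 :: "nat \<Rightarrow> nat \<Rightarrow> real" where "S7 \<equiv> spectral_mat d U lam"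
abbreviation C7 :: "nat \<Rightarrow> nat \<Rightarrow> real" where "C7 \<equiv> spectral_mat d U (cc d n lam)"

lemma SM: "(\<Sum>j<d. spectral_mat d U x a j * spectral_mat d U y j b) = spectral_mat d U (\<lambda>t. x t * y t) a b"
  by (rule spec_mult[OF orth])

lemma T1_eq: "m < d \<Longrightarrow> p < d \<Longrightarrow> (\<Sum>r<d. \<Sum>i<d. S7 m i * (dlt i r * S7 p r)) = spectral_mat d U (\<lambda>t. lam t * lam t) m p"
proof -
  assume mp: "m < d" "p < d"
  have "(\<Sum>r<d. \<Sum>i<d. S7 m i * (dlt i r * S7 p r)) = (\<Sum>r<d. S7 m r * S7 r p)"
  proof (rule sum.cong[OF refl])
    fix r assume r: "r \<in> {..<d}"
    have "(\<Sum>i<d. S7 m i * (dlt i r * S7 p r)) = (\<Sum>i<d. (S7 m i * S7 p r) * dlt i r)"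
      by (intro sum.cong refl) (simp only: mult_ac)
    also have "\<dots> = S7 m r * S7 p r" using r by (simp add: sum_dlt2)
    finally show "(\<Sum>i<d. S7 m i * (dlt i r * S7 p r)) = S7 m r * S7 r p" by (simp add: spec_sym[of d U lam p r])
  qed
  also have "\<dots> = spectral_mat d U (\<lambda>t. lam t * lam t) m p" by (rule SM)
  finally show ?thesis .
qed

lemma FB_eq:
  assumes "m < d" "p < d"
  shows "(\<Sum>j<d. \<Sum>r<d. \<Sum>a<d. C7 a r * (\<Sum>i<d. S7 m i * (dlt i j * (S7 p r * S7 j a))))
       = spectral_mat d U (\<lambda>t. lam t * lam t * cc d n lam t * lam t) m p"
proof -
  have "(\<Sum>j<d. \<Sum>r<d. \<Sum>a<d. C7 a r * (\<Sum>i<d. S7 m i * (dlt i j * (S7 p r * S7 j a))))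
      = (\<Sum>j<d. \<Sum>r<d. \<Sum>a<d. C7 a r * (S7 m j * (S7 p r * S7 j a)))"
  proof (intro sum.cong refl)
    fix j r a assume j: "j \<in> {..<d}"
    have "(\<Sum>i<d. S7 m i * (dlt i j * (S7 p r * S7 j a))) = (\<Sum>i<d. (S7 m i * (S7 p r * S7 j a)) * dlt i j)"
      by (intro sum.cong refl) (simp only: mult_ac)
    also have "\<dots> = S7 m j * (S7 p r * S7 j a)" using j by (simp add: sum_dlt2)
    finally show "C7 a r * (\<Sum>i<d. S7 m i * (dlt i j * (S7 p r * S7 j a))) = C7 a r * (S7 m j * (S7 p r * S7 j a))" by simp
  qed
  also have "\<dots> = (\<Sum>r<d. \<Sum>j<d. \<Sum>a<d. C7 a r * (S7 m j * (S7 p r * S7 j a)))"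
    by (rule sum.swap)
  also have "\<dots> = (\<Sum>r<d. \<Sum>a<d. \<Sum>j<d. C7 a r * (S7 m j * (S7 p r * S7 j a)))"
    by (rule sum.cong[OF refl], rule sum.swap)
  also have "\<dots> = (\<Sum>r<d. \<Sum>a<d. (C7 a r * S7 p r) * (\<Sum>j<d. S7 m j * S7 j a))"
    by (intro sum.cong refl) (simp add: sum_distrib_left mult_ac)
  also have "\<dots> = (\<Sum>r<d. \<Sum>a<d. (C7 a r * S7 p r) * spectral_mat d U (\<lambda>t. lam t * lam t) m a)"
    by (simp only: SM)
  also have "\<dots> = (\<Sum>r<d. S7 p r * (\<Sum>a<d. spectral_mat d U (\<lambda>t. lam t * lam t) m a * C7 a r))"
    by (intro sum.cong refl) (simp add: sum_distrib_left mult_ac)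
  also have "\<dots> = (\<Sum>r<d. S7 p r * spectral_mat d U (\<lambda>t. lam t * lam t * cc d n lam t) m r)"
    by (simp only: SM)
  also have "\<dots> = (\<Sum>r<d. spectral_mat d U (\<lambda>t. lam t * lam t * cc d n lam t) m r * S7 r p)"
    by (intro sum.cong refl) (simp add: spec_sym[of d U lam p] mult.commute)
  also have "\<dots> = spectral_mat d U (\<lambda>t. lam t * lam t * cc d n lam t * lam t) m p"
    by (simp only: SM)
  finally show ?thesis .
qed

lemma FA_eq:
  assumes "m < d" "p < d"
  shows "(\<Sum>j<d. \<Sum>r<d. \<Sum>a<d. C7 a r * (\<Sum>i<d. (S7 m i * S7 j a + S7 m j * S7 i a + S7 m a * S7 i j) * (dlt i j * S7 p r)))
       = 2 * spectral_mat d U (\<lambda>t. lam t * lam t * cc d n lam t * lam t) m p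
         + (\<Sum>t<d. lam t) * spectral_mat d U (\<lambda>t. lam t * cc d n lam t * lam t) m p"
proof -
  have "(\<Sum>j<d. \<Sum>r<d. \<Sum>a<d. C7 a r * (\<Sum>i<d. (S7 m i * S7 j a + S7 m j * S7 i a + S7 m a * S7 i j) * (dlt i j * S7 p r)))
      = (\<Sum>j<d. \<Sum>r<d. \<Sum>a<d. 2 * (C7 a r * (S7 m j * (S7 p r * S7 j a))) + S7 j j * (C7 a r * S7 m a * S7 p r))"
  proof (intro sum.cong refl)
    fix j r a assume j: "j \<in> {..<d}"
    have "(\<Sum>i<d. (S7 m i * S7 j a + S7 m j * S7 i a + S7 m a * S7 i j) * (dlt i j * S7 p r))
        = (\<Sum>i<d. ((S7 m i * S7 j a + S7 m j * S7 i a + S7 m a * S7 i j) * S7 p r) * dlt i j)"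
      by (intro sum.cong refl) (simp only: mult_ac)
    also have "\<dots> = (S7 m j * S7 j a + S7 m j * S7 j a + S7 m a * S7 j j) * S7 p r" using j by (simp add: sum_dlt2)
    finally show "C7 a r * (\<Sum>i<d. (S7 m i * S7 j a + S7 m j * S7 i a + S7 m a * S7 i j) * (dlt i j * S7 p r))
       = 2 * (C7 a r * (S7 m j * (S7 p r * S7 j a))) + S7 j j * (C7 a r * S7 m a * S7 p r)"
      by (simp add: algebra_simps)
  qed
  also have "\<dots> = 2 * (\<Sum>j<d. \<Sum>r<d. \<Sum>a<d. C7 a r * (S7 m j * (S7 p r * S7 j a)))
       + (\<Sum>j<d. S7 j j) * (\<Sum>r<d. \<Sum>a<d. C7 a r * S7 m a * S7 p r)"
  proof -
    have "(\<Sum>j<d. \<Sum>r<d. \<Sum>a<d. 2 * (C7 a r * (S7 m j * (S7 p r * S7 j a))) + S7 j j * (C7 a r * S7 m a * S7 p r))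
       = (\<Sum>j<d. \<Sum>r<d. \<Sum>a<d. 2 * (C7 a r * (S7 m j * (S7 p r * S7 j a)))) + (\<Sum>j<d. \<Sum>r<d. \<Sum>a<d. S7 j j * (C7 a r * S7 m a * S7 p r))"
      by (simp only: sum.distrib)
    also have "(\<Sum>j<d. \<Sum>r<d. \<Sum>a<d. 2 * (C7 a r * (S7 m j * (S7 p r * S7 j a)))) = 2 * (\<Sum>j<d. \<Sum>r<d. \<Sum>a<d. C7 a r * (S7 m j * (S7 p r * S7 j a)))"
      by (simp only: sum_distrib_left)
    also have "(\<Sum>j<d. \<Sum>r<d. \<Sum>a<d. S7 j j * (C7 a r * S7 m a * S7 p r)) = (\<Sum>j<d. S7 j j * (\<Sum>r<d. \<Sum>a<d. C7 a r * S7 m a * S7 p r))"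
      by (simp only: sum_distrib_left)
    also have "\<dots> = (\<Sum>j<d. S7 j j) * (\<Sum>r<d. \<Sum>a<d. C7 a r * S7 m a * S7 p r)"
      by (rule sum_distrib_right[symmetric])
    finally show ?thesis .
  qed
  also have "(\<Sum>j<d. \<Sum>r<d. \<Sum>a<d. C7 a r * (S7 m j * (S7 p r * S7 j a)))
       = spectral_mat d U (\<lambda>t. lam t * lam t * cc d n lam t * lam t) m p"
  proof -
    have "(\<Sum>j<d. \<Sum>r<d. \<Sum>a<d. C7 a r * (S7 m j * (S7 p r * S7 j a)))
       = (\<Sum>j<d. \<Sum>r<d. \<Sum>a<d. C7 a r * (\<Sum>i<d. S7 m i * (dlt i j * (S7 p r * S7 j a))))"
    proof (intro sum.cong refl)
      fix j r a assume j: "j \<in> {..<d}"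
      have "(\<Sum>i<d. S7 m i * (dlt i j * (S7 p r * S7 j a))) = (\<Sum>i<d. (S7 m i * (S7 p r * S7 j a)) * dlt i j)"
        by (intro sum.cong refl) (simp only: mult_ac)
      also have "\<dots> = S7 m j * (S7 p r * S7 j a)" using j by (simp add: sum_dlt2)
      finally show "C7 a r * (S7 m j * (S7 p r * S7 j a)) = C7 a r * (\<Sum>i<d. S7 m i * (dlt i j * (S7 p r * S7 j a)))" by simp
    qed
    then show ?thesis using FB_eq[OF assms] by simp
  qed
  also have "(\<Sum>j<d. S7 j j) = (\<Sum>t<d. lam t)" by (rule spec_trace[OF orth])
  also have "(\<Sum>r<d. \<Sum>a<d. C7 a r * S7 m a * S7 p r) = spectral_mat d U (\<lambda>t. lam t * cc d n lam t * lam t) m p"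
  proof -
    have "(\<Sum>r<d. \<Sum>a<d. C7 a r * S7 m a * S7 p r) = (\<Sum>r<d. (\<Sum>a<d. S7 m a * C7 a r) * S7 r p)"
      by (intro sum.cong refl) (simp add: sum_distrib_right sum_distrib_left spec_sym[of d U lam p] mult_ac)
    also have "\<dots> = (\<Sum>r<d. spectral_mat d U (\<lambda>t. lam t * cc d n lam t) m r * S7 r p)"
      by (simp only: SM)
    also have "\<dots> = spectral_mat d U (\<lambda>t. lam t * cc d n lam t * lam t) m p"
      by (simp only: SM)
    finally show ?thesis .
  qed
  finally show ?thesis .
qed

lemma tr_nonneg: "0 \<le> (\<Sum>t<d. lam t)"
  by (intro sum_nonneg) (simp add: lam_nonneg)

lemma pointwise_zero:
  assumes t: "t < d"
  shows "lam t * lam t - (1 / real n) * ((real n + 1) * (lam t * lam t * cc d n lam t * lam t)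
         + (\<Sum>t<d. lam t) * (lam t * cc d n lam t * lam t)) = 0"
proof -
  define D where "D = (real n + 1) / real n * lam t + (1 / real n) * (\<Sum>m<d. lam m)"
  have c: "cc d n lam t = 1 / D" unfolding cc_def D_def ..
  have np: "real n > 0" using n1 by simp
  show ?thesis
  proof (cases "D = 0")
    case True
    have "0 \<le> (real n + 1) / real n * lam t" using lam_nonneg[OF t] np by simp
    moreover have "0 \<le> (1 / real n) * (\<Sum>m<d. lam m)" using tr_nonneg np by simp
    ultimately have "(real n + 1) / real n * lam t = 0" using True unfolding D_def by linarith
    then have "lam t = 0" using np by simp
    then show ?thesis by simp
  next
    case False
    have "(1 / real n) * ((real n + 1) * lam t + (\<Sum>m<d. lam m)) = D"
      unfolding D_def using np by (simp add: field_simps)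
    then have e: "(1 / real n) * ((real n + 1) * lam t + (\<Sum>m<d. lam m)) * cc d n lam t = 1"
      using False c by simp
    have "lam t * lam t - (1 / real n) * ((real n + 1) * (lam t * lam t * cc d n lam t * lam t)
         + (\<Sum>t<d. lam t) * (lam t * cc d n lam t * lam t))
        = lam t * lam t * (1 - (1 / real n) * ((real n + 1) * lam t + (\<Sum>m<d. lam m)) * cc d n lam t)"
      by (simp add: algebra_simps)
    also have "\<dots> = 0" using e by simp
    finally show ?thesis .
  qed
qed

lemma spec_comb:
  "spectral_mat d U x a b - c * (\<alpha> * spectral_mat d U y a b + \<beta> * spectral_mat d U z a b)
   = spectral_mat d U (\<lambda>t. x t - c * (\<alpha> * y t + \<beta> * z t)) a b"
proof -
  have "spectral_mat d U (\<lambda>t. x t - c * (\<alpha> * y t + \<beta> * z t)) a b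
      = spectral_mat d U (\<lambda>t. 1 * x t + (- c * \<alpha>) * y t + (- c * \<beta>) * z t) a b"
    by (rule spec_cong) (simp add: algebra_simps)
  also have "\<dots> = (\<Sum>t<d. U a t * x t * U b t + (- c * \<alpha>) * (U a t * y t * U b t) + (- c * \<beta>) * (U a t * z t * U b t))"
    unfolding spectral_mat_def by (intro sum.cong refl) (simp add: algebra_simps)
  also have "\<dots> = spectral_mat d U x a b + (- c * \<alpha>) * spectral_mat d U y a b + (- c * \<beta>) * spectral_mat d U z a b"
    unfolding spectral_mat_def by (simp only: sum.distrib sum_distrib_left)
  finally show ?thesis by (simp add: algebra_simps)
qed

lemma ALG:
  assumes "m < d" "p < d"
  shows "(\<Sum>r<d. \<Sum>i<d. S7 m i * (dlt i r * S7 p r))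
     - (1 / real n) * ((\<Sum>j<d. \<Sum>r<d. \<Sum>a<d. C7 a r * (\<Sum>i<d. (S7 m i * S7 j a + S7 m j * S7 i a + S7 m a * S7 i j) * (dlt i j * S7 p r)))
        + (real n - 1) * (\<Sum>j<d. \<Sum>r<d. \<Sum>a<d. C7 a r * (\<Sum>i<d. S7 m i * (dlt i j * (S7 p r * S7 j a))))) = 0"
proof -
  let ?X = "spectral_mat d U (\<lambda>t. lam t * lam t) m p"
  let ?Y = "spectral_mat d U (\<lambda>t. lam t * lam t * cc d n lam t * lam t) m p"
  let ?Z = "spectral_mat d U (\<lambda>t. lam t * cc d n lam t * lam t) m p"
  let ?tr = "\<Sum>t<d. lam t"
  have "?X - (1 / real n) * ((2 * ?Y + ?tr * ?Z) + (real n - 1) * ?Y) = ?X - (1 / real n) * ((real n + 1) * ?Y + ?tr * ?Z)"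
    by (simp add: algebra_simps)
  also have "\<dots> = spectral_mat d U (\<lambda>t. lam t * lam t - (1 / real n) * ((real n + 1) * (lam t * lam t * cc d n lam t * lam t)
         + ?tr * (lam t * cc d n lam t * lam t))) m p"
    by (rule spec_comb)
  also have "\<dots> = spectral_mat d U (\<lambda>t. 0) m p"
    by (rule spec_cong) (rule pointwise_zero)
  also have "\<dots> = 0" unfolding spectral_mat_def by simp
  finally show ?thesis unfolding T1_eq[OF assms] FA_eq[OF assms] FB_eq[OF assms] .
qed

lemma keyB:
  assumes l: "l < n" and m: "m < d" and p: "p < d"
  shows "(\<integral>\<omega>. (Z0 d n \<omega> m l * Z0 d n \<omega> d l * \<omega> n p) * hS d n U lam \<omega> \<partial>data_measure d n U lam) = 0"
proof -
  have psi: "Z0 d n \<omega> m l * Z0 d n \<omega> d l * \<omega> n p = (\<Sum>i<d. \<omega> l m * (\<omega> l i * (\<omega> (Suc n) i * \<omega> n p)))" for \<omega>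
  proof -
    have z1: "Z0 d n \<omega> m l = \<omega> l m" using m by (simp add: Z0_def)
    have z: "Z0 d n \<omega> d l = (\<Sum>i<d. \<omega> l i * \<omega> (Suc n) i)" using l by (simp add: Z0_def)
    show ?thesis unfolding z1 z by (simp add: sum_distrib_left sum_distrib_right mult_ac)
  qed
  have e1: "(Z0 d n \<omega> m l * Z0 d n \<omega> d l * \<omega> n p) * h1 d n \<omega> =
      (\<Sum>r<d. \<Sum>i<d. monoL [(l,m),(l,i),(Suc n,i),(n,p),(n,r),(Suc n,r)] \<omega>)" for \<omega>
    unfolding mult_h1 psi by (simp add: monoL_def sum_distrib_right sum_distrib_left mult_ac)
  have e2: "(Z0 d n \<omega> m l * Z0 d n \<omega> d l * \<omega> n p) * h2 d n U lam \<omega> =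
     (\<Sum>k<n. \<Sum>j<d. \<Sum>r<d. \<Sum>a<d. C7 a r * (\<Sum>i<d. monoL [(l,m),(l,i),(Suc n,i),(n,p),(n,r),(k,j),(Suc n,j),(k,a)] \<omega>))" for \<omega>
    unfolding mult_h2 psi by (simp add: monoL_def sum_distrib_right sum_distrib_left mult_ac)
  have pt: "(\<lambda>\<omega>. (Z0 d n \<omega> m l * Z0 d n \<omega> d l * \<omega> n p) * hS d n U lam \<omega>) = (\<lambda>\<omega>.
      (\<Sum>r<d. \<Sum>i<d. monoL [(l,m),(l,i),(Suc n,i),(n,p),(n,r),(Suc n,r)] \<omega>)
     - (1 / real n) * (\<Sum>k<n. \<Sum>j<d. \<Sum>r<d. \<Sum>a<d. C7 a r * (\<Sum>i<d. monoL [(l,m),(l,i),(Suc n,i),(n,p),(n,r),(k,j),(Suc n,j),(k,a)] \<omega>)))"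
    by (rule ext) (simp only: e1[symmetric] e2[symmetric] hS_def right_diff_distrib mult.left_commute[of _ "1 / real n"])
  let ?M = "data_measure d n U lam"
  have iA: "integrable ?M (\<lambda>\<omega>. \<Sum>r<d. \<Sum>i<d. monoL [(l,m),(l,i),(Suc n,i),(n,p),(n,r),(Suc n,r)] \<omega>)"
    by (intro Bochner_Integration.integrable_sum int_monoL) (use l m p in auto)
  have iB1: "integrable ?M (\<lambda>\<omega>. \<Sum>i<d. monoL [(l,m),(l,i),(Suc n,i),(n,p),(n,r),(k,j),(Suc n,j),(k,a)] \<omega>)"
    if "k < n" "j < d" "r < d" "a < d" for k j r a
    by (intro Bochner_Integration.integrable_sum int_monoL) (use l m p that in auto)
  have iB: "integrable ?M (\<lambda>\<omega>. \<Sum>k<n. \<Sum>j<d. \<Sum>r<d. \<Sum>a<d. C7 a r * (\<Sum>i<d. monoL [(l,m),(l,i),(Suc n,i),(n,p),(n,r),(k,j),(Suc n,j),(k,a)] \<omega>))"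
    by (intro Bochner_Integration.integrable_sum Bochner_Integration.integrable_mult_right iB1) auto
  have IA: "(\<integral>\<omega>. (\<Sum>r<d. \<Sum>i<d. monoL [(l,m),(l,i),(Suc n,i),(n,p),(n,r),(Suc n,r)] \<omega>) \<partial>?M)
     = (\<Sum>r<d. \<Sum>i<d. spectral_mat d U lam m i * (dlt i r * spectral_mat d U lam p r))"
  proof -
    have "(\<integral>\<omega>. (\<Sum>r<d. \<Sum>i<d. monoL [(l,m),(l,i),(Suc n,i),(n,p),(n,r),(Suc n,r)] \<omega>) \<partial>?M)
       = (\<Sum>r<d. \<Sum>i<d. (\<integral>\<omega>. monoL [(l,m),(l,i),(Suc n,i),(n,p),(n,r),(Suc n,r)] \<omega> \<partial>?M))"
      by (rule int_sum2_eq) (intro int_monoL, use l m p in auto)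
    also have "\<dots> = (\<Sum>r<d. \<Sum>i<d. spectral_mat d U lam m i * (dlt i r * spectral_mat d U lam p r))"
      by (intro sum.cong refl) (simp add: evB1[OF n1 orth lam_nonneg] l m p)
    finally show ?thesis .
  qed
  have IB: "(\<integral>\<omega>. (\<Sum>k<n. \<Sum>j<d. \<Sum>r<d. \<Sum>a<d. C7 a r * (\<Sum>i<d. monoL [(l,m),(l,i),(Suc n,i),(n,p),(n,r),(k,j),(Suc n,j),(k,a)] \<omega>)) \<partial>?M)
     = (\<Sum>k<n. \<Sum>j<d. \<Sum>r<d. \<Sum>a<d. C7 a r * (\<Sum>i<d. (if k = l then (S7 m i * S7 j a + S7 m j * S7 i a + S7 m a * S7 i j) * (dlt i j * S7 p r)
        else S7 m i * (dlt i j * (S7 p r * S7 j a)))))"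
  proof -
    have "(\<integral>\<omega>. (\<Sum>k<n. \<Sum>j<d. \<Sum>r<d. \<Sum>a<d. C7 a r * (\<Sum>i<d. monoL [(l,m),(l,i),(Suc n,i),(n,p),(n,r),(k,j),(Suc n,j),(k,a)] \<omega>)) \<partial>?M)
      = (\<Sum>k<n. \<Sum>j<d. \<Sum>r<d. \<Sum>a<d. C7 a r * (\<integral>\<omega>. (\<Sum>i<d. monoL [(l,m),(l,i),(Suc n,i),(n,p),(n,r),(k,j),(Suc n,j),(k,a)] \<omega>) \<partial>?M))"
      by (rule int_sum4c) (intro iB1, auto)
    also have "\<dots> = (\<Sum>k<n. \<Sum>j<d. \<Sum>r<d. \<Sum>a<d. C7 a r * (\<Sum>i<d. (\<integral>\<omega>. monoL [(l,m),(l,i),(Suc n,i),(n,p),(n,r),(k,j),(Suc n,j),(k,a)] \<omega> \<partial>?M)))"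
    proof (intro sum.cong refl arg_cong2[where f="(*)"])
      fix k j r a assume "k \<in> {..<n}" "j \<in> {..<d}" "r \<in> {..<d}" "a \<in> {..<d}"
      then show "(\<integral>\<omega>. (\<Sum>i<d. monoL [(l,m),(l,i),(Suc n,i),(n,p),(n,r),(k,j),(Suc n,j),(k,a)] \<omega>) \<partial>?M)
         = (\<Sum>i<d. (\<integral>\<omega>. monoL [(l,m),(l,i),(Suc n,i),(n,p),(n,r),(k,j),(Suc n,j),(k,a)] \<omega> \<partial>?M))"
        by (intro Bochner_Integration.integral_sum int_monoL) (use l m p in auto)
    qed
    also have "\<dots> = (\<Sum>k<n. \<Sum>j<d. \<Sum>r<d. \<Sum>a<d. C7 a r * (\<Sum>i<d. (if k = l then (S7 m i * S7 j a + S7 m j * S7 i a + S7 m a * S7 i j) * (dlt i j * S7 p r)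
        else S7 m i * (dlt i j * (S7 p r * S7 j a)))))"
      by (intro sum.cong refl arg_cong2[where f="(*)"]) (simp add: evB2[OF n1 orth lam_nonneg] l m p)
    finally show ?thesis .
  qed
  let ?FA = "\<Sum>j<d. \<Sum>r<d. \<Sum>a<d. C7 a r * (\<Sum>i<d. (S7 m i * S7 j a + S7 m j * S7 i a + S7 m a * S7 i j) * (dlt i j * S7 p r))"
  let ?FB = "\<Sum>j<d. \<Sum>r<d. \<Sum>a<d. C7 a r * (\<Sum>i<d. S7 m i * (dlt i j * (S7 p r * S7 j a)))"
  have ksum: "(\<Sum>k<n. \<Sum>j<d. \<Sum>r<d. \<Sum>a<d. C7 a r * (\<Sum>i<d. (if k = l then (S7 m i * S7 j a + S7 m j * S7 i a + S7 m a * S7 i j) * (dlt i j * S7 p r)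
        else S7 m i * (dlt i j * (S7 p r * S7 j a))))) = ?FA + (real n - 1) * ?FB"
  proof -
    have "(\<Sum>k<n. \<Sum>j<d. \<Sum>r<d. \<Sum>a<d. C7 a r * (\<Sum>i<d. (if k = l then (S7 m i * S7 j a + S7 m j * S7 i a + S7 m a * S7 i j) * (dlt i j * S7 p r)
        else S7 m i * (dlt i j * (S7 p r * S7 j a))))) = (\<Sum>k<n. if k = l then ?FA else ?FB)"
      by (intro sum.cong refl) simp
    also have "\<dots> = ?FA + (real n - 1) * ?FB" by (rule sum_if_l[OF l])
    finally show ?thesis .
  qed
  have "(\<integral>\<omega>. (Z0 d n \<omega> m l * Z0 d n \<omega> d l * \<omega> n p) * hS d n U lam \<omega> \<partial>?M)
     = (\<integral>\<omega>. (\<Sum>r<d. \<Sum>i<d. monoL [(l,m),(l,i),(Suc n,i),(n,p),(n,r),(Suc n,r)] \<omega>)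
     - (1 / real n) * (\<Sum>k<n. \<Sum>j<d. \<Sum>r<d. \<Sum>a<d. C7 a r * (\<Sum>i<d. monoL [(l,m),(l,i),(Suc n,i),(n,p),(n,r),(k,j),(Suc n,j),(k,a)] \<omega>)) \<partial>?M)"
    by (simp only: pt)
  also have "\<dots> = (\<Sum>r<d. \<Sum>i<d. S7 m i * (dlt i r * S7 p r)) - (1 / real n) * (?FA + (real n - 1) * ?FB)"
    using iA iB by (simp add: Bochner_Integration.integral_diff IA IB ksum)
  also have "\<dots> = 0" by (rule ALG[OF m p])
  finally show ?thesis .
qed

lemma h_eq: "(\<Sum>k<d. \<omega> (n+1) k * \<omega> n k) + pred d n (b_opt d) (A_opt d n U lam) \<omega> = hS d n U lam \<omega>"
proof -
  have bs: "(\<Sum>m<d+1. b_opt d m * Z0 d n \<omega> m k) = (\<Sum>j<d. \<omega> k j * \<omega> (Suc n) j)" if k: "k < n" for k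
  proof -
    have "(\<Sum>m<d+1. b_opt d m * Z0 d n \<omega> m k) = (\<Sum>m<d. b_opt d m * Z0 d n \<omega> m k) + b_opt d d * Z0 d n \<omega> d k"
      by simp
    also have "(\<Sum>m<d. b_opt d m * Z0 d n \<omega> m k) = 0" by (rule sum.neutral) (simp add: b_opt_def)
    also have "b_opt d d * Z0 d n \<omega> d k = (\<Sum>j<d. \<omega> k j * \<omega> (Suc n) j)" using k by (simp add: b_opt_def Z0_def)
    finally show ?thesis by simp
  qed
  have as: "(\<Sum>q<d+1. Z0 d n \<omega> q k * A_opt d n U lam q p * \<omega> n p) = - (\<Sum>q<d. C7 q p * (\<omega> n p * \<omega> k q))"
    if k: "k < n" and p: "p < d" for k p
  proof -
    have "(\<Sum>q<d+1. Z0 d n \<omega> q k * A_opt d n U lam q p * \<omega> n p) = (\<Sum>q<d. Z0 d n \<omega> q k * A_opt d n U lam q p * \<omega> n p) + Z0 d n \<omega> d k * A_opt d n U lam d p * \<omega> n p"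
      by simp
    also have "Z0 d n \<omega> d k * A_opt d n U lam d p * \<omega> n p = 0" by (simp add: A_opt_def)
    also have "(\<Sum>q<d. Z0 d n \<omega> q k * A_opt d n U lam q p * \<omega> n p) = (\<Sum>q<d. - (C7 q p * (\<omega> n p * \<omega> k q)))"
      by (intro sum.cong refl) (simp add: Z0_def A_opt_def spectral_mat_def cc_def)
    finally show ?thesis by (simp add: sum_negf)
  qed
  have perk: "(\<Sum>m<d+1. b_opt d m * Z0 d n \<omega> m k) * (\<Sum>p<d. \<Sum>q<d+1. Z0 d n \<omega> q k * A_opt d n U lam q p * \<omega> n p)
     = - (\<Sum>j<d. \<Sum>r<d. \<Sum>a<d. C7 a r * (\<omega> n r * (\<omega> k j * (\<omega> (Suc n) j * \<omega> k a))))" if k: "k < n" for k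
  proof -
    have "(\<Sum>m<d+1. b_opt d m * Z0 d n \<omega> m k) * (\<Sum>p<d. \<Sum>q<d+1. Z0 d n \<omega> q k * A_opt d n U lam q p * \<omega> n p)
       = (\<Sum>j<d. \<omega> k j * \<omega> (Suc n) j) * (\<Sum>p<d. - (\<Sum>q<d. C7 q p * (\<omega> n p * \<omega> k q)))"
      using bs[OF k] as[OF k] by simp
    also have "\<dots> = - (\<Sum>j<d. \<Sum>p<d. \<Sum>q<d. (\<omega> k j * \<omega> (Suc n) j) * (C7 q p * (\<omega> n p * \<omega> k q)))"
      by (subst sum_product) (simp only: mult_minus_right sum_distrib_left sum_negf)
    also have "\<dots> = - (\<Sum>j<d. \<Sum>r<d. \<Sum>a<d. C7 a r * (\<omega> n r * (\<omega> k j * (\<omega> (Suc n) j * \<omega> k a))))"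
      by (simp only: mult_ac)
    finally show ?thesis .
  qed
  have "pred d n (b_opt d) (A_opt d n U lam) \<omega> = (1 / real n) * (\<Sum>k<n. - (\<Sum>j<d. \<Sum>r<d. \<Sum>a<d. C7 a r * (\<omega> n r * (\<omega> k j * (\<omega> (Suc n) j * \<omega> k a)))))"
    unfolding pred_def by (rule arg_cong[where f="\<lambda>x. 1 / real n * x"], rule sum.cong[OF refl]) (rule perk, simp)
  also have "\<dots> = - (1 / real n) * h2 d n U lam \<omega>"
    unfolding h2_def by (simp add: sum_negf)
  finally have "pred d n (b_opt d) (A_opt d n U lam) \<omega> = - (1 / real n) * h2 d n U lam \<omega>" .
  moreover have "(\<Sum>k<d. \<omega> (n+1) k * \<omega> n k) = h1 d n \<omega>" unfolding h1_def by (simp add: mult.commute)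
  ultimately show ?thesis unfolding hS_def by simp
qed

end


lemma am_Z0:
  assumes l: "l < n" and m: "m < d + 1"
  shows "allmom (data_measure d n U lam) (\<lambda>\<omega>. Z0 d n \<omega> m l)"
proof (cases "m < d")
  case True
  then have "(\<lambda>\<omega>. Z0 d n \<omega> m l) = (\<lambda>\<omega>. \<omega> l m)" by (simp add: Z0_def)
  then show ?thesis using allmom_DM_coord[of l n m d U lam] l True by simp
next
  case False
  then have "(\<lambda>\<omega>. Z0 d n \<omega> m l) = (\<lambda>\<omega>. \<Sum>k<d. \<omega> l k * \<omega> (n+1) k)" using l by (simp add: Z0_def)
  moreover have "allmom (data_measure d n U lam) (\<lambda>\<omega>. \<Sum>k<d. \<omega> l k * \<omega> (n+1) k)"
    by (intro allmom_sum[OF fm_DM] allmom_mult allmom_DM_coord) (use l in auto)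
  ultimately show ?thesis by simp
qed

lemma am_pred: "allmom (data_measure d n U lam) (pred d n b A)"
proof -
  have e: "pred d n b A = (\<lambda>\<omega>. (1 / real n) * (\<Sum>l<n. (\<Sum>m<d+1. b m * Z0 d n \<omega> m l) * (\<Sum>p<d. \<Sum>q<d+1. Z0 d n \<omega> q l * A q p * \<omega> n p)))"
    by (rule ext) (simp only: pred_def)
  show ?thesis unfolding e
    by (intro allmom_cmult[OF fm_DM] allmom_sum[OF fm_DM] allmom_mult allmom_const[OF fm_DM] am_Z0 allmom_DM_coord) auto
qed

lemma am_hS: "allmom (data_measure d n U lam) (hS d n U lam)"
proof -
  have e: "hS d n U lam = (\<lambda>\<omega>. (\<Sum>r<d. \<omega> n r * \<omega> (Suc n) r) - (1 / real n) *
     (\<Sum>k<n. \<Sum>j<d. \<Sum>r<d. \<Sum>a<d. spectral_mat d U (cc d n lam) a r * (\<omega> n r * (\<omega> k j * (\<omega> (Suc n) j * \<omega> k a)))))"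
    by (rule ext) (simp only: hS_def h1_def h2_def)
  show ?thesis unfolding e
    by (intro allmom_diff allmom_cmult[OF fm_DM] allmom_sum[OF fm_DM] allmom_mult allmom_DM_coord) auto
qed

lemma am_t: "allmom (data_measure d n U lam) (\<lambda>\<omega>. \<Sum>k<d. \<omega> (n+1) k * \<omega> n k)"
  by (intro allmom_sum[OF fm_DM] allmom_mult allmom_DM_coord) auto

context
  fixes d n :: nat and U :: "nat \<Rightarrow> nat \<Rightarrow> real" and lam :: "nat \<Rightarrow> real"
  assumes n1: "n \<ge> 1"
    and orth: "\<And>i j. i < d \<Longrightarrow> j < d \<Longrightarrow> (\<Sum>k<d. U i k * U j k) = (if i = j then 1 else 0)"
    and lam_nonneg: "\<And>i. i < d \<Longrightarrow> lam i \<ge> 0"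
begin

lemma keyall:
  assumes l: "l < n" and m: "m < d + 1" and q: "q < d + 1" and p: "p < d"
  shows "(\<integral>\<omega>. (Z0 d n \<omega> m l * Z0 d n \<omega> q l * \<omega> n p) * hS d n U lam \<omega> \<partial>data_measure d n U lam) = 0"
proof (cases "m < d")
  case mT: True
  show ?thesis
  proof (cases "q < d")
    case True
    then have "(\<lambda>\<omega>. (Z0 d n \<omega> m l * Z0 d n \<omega> q l * \<omega> n p) * hS d n U lam \<omega>) = (\<lambda>\<omega>. (\<omega> l m * \<omega> l q * \<omega> n p) * hS d n U lam \<omega>)"
      using mT by (simp add: Z0_def)
    then show ?thesis using keyA[OF n1 orth lam_nonneg l mT True p] by simp
  next
    case False
    then have "q = d" using q by simp
    then show ?thesis using keyB[OF n1 orth lam_nonneg l mT p] by simp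
  qed
next
  case mF: False
  then have md: "m = d" using m by simp
  show ?thesis
  proof (cases "q < d")
    case True
    have "(\<lambda>\<omega>. (Z0 d n \<omega> m l * Z0 d n \<omega> q l * \<omega> n p) * hS d n U lam \<omega>) = (\<lambda>\<omega>. (Z0 d n \<omega> q l * Z0 d n \<omega> d l * \<omega> n p) * hS d n U lam \<omega>)"
      using md by (simp add: mult.commute)
    then show ?thesis using keyB[OF n1 orth lam_nonneg l True p] by simp
  next
    case False
    then have "q = d" using q by simp
    then show ?thesis using keyD[OF n1 orth lam_nonneg l p] md by simp
  qed
qed

lemma orthog: "(\<integral>\<omega>. pred d n b A \<omega> * hS d n U lam \<omega> \<partial>data_measure d n U lam) = 0"
proof -
  let ?F = "\<lambda>l m p q \<omega>. (Z0 d n \<omega> m l * Z0 d n \<omega> q l * \<omega> n p) * hS d n U lam \<omega>"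
  have pt: "pred d n b A \<omega> * hS d n U lam \<omega> = (1 / real n) * (\<Sum>l<n. \<Sum>m<d+1. \<Sum>p<d. \<Sum>q<d+1. (b m * A q p) * ?F l m p q \<omega>)" for \<omega>
    by (simp only: pred_expand sum_distrib_right mult.assoc)
  have iF: "integrable (data_measure d n U lam) (?F l m p q)" if "l \<in> {..<n}" "m \<in> {..<d+1}" "p \<in> {..<d}" "q \<in> {..<d+1}" for l m p q
    using that by (intro allmom_integrable allmom_mult am_Z0 allmom_DM_coord am_hS) auto
  have "(\<integral>\<omega>. pred d n b A \<omega> * hS d n U lam \<omega> \<partial>data_measure d n U lam)
      = (\<integral>\<omega>. (1 / real n) * (\<Sum>l<n. \<Sum>m<d+1. \<Sum>p<d. \<Sum>q<d+1. (b m * A q p) * ?F l m p q \<omega>) \<partial>data_measure d n U lam)"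
    by (simp only: pt)
  also have "\<dots> = (1 / real n) * (\<Sum>l<n. \<Sum>m<d+1. \<Sum>p<d. \<Sum>q<d+1. (b m * A q p) * (\<integral>\<omega>. ?F l m p q \<omega> \<partial>data_measure d n U lam))"
    by (simp only: integral_mult_right_zero int_sum4c[OF iF])
  also have "\<dots> = 0"
    by (simp add: keyall)
  finally show ?thesis .
qed

end

theorem theorem1:
  fixes d n :: nat and U :: "nat \<Rightarrow> nat \<Rightarrow> real" and lam :: "nat \<Rightarrow> real"
  assumes "d \<ge> 1" and "n \<ge> 1"
    and orth: "\<And>i j. i < d \<Longrightarrow> j < d \<Longrightarrow> (\<Sum>k<d. U i k * U j k) = (if i = j then 1 else 0)"
    and lam_nonneg: "\<And>i. i < d \<Longrightarrow> lam i \<ge> 0"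
  shows "(\<forall>b A. icl_loss d n U lam (b_opt d) (A_opt d n U lam) \<le> icl_loss d n U lam b A)
    \<and> (\<forall>\<gamma>::real. \<gamma> \<noteq> 0 \<longrightarrow> (\<forall>b A.
          icl_loss d n U lam (\<lambda>j. \<gamma> * b_opt d j) (\<lambda>i j. A_opt d n U lam i j / \<gamma>)
            \<le> icl_loss d n U lam b A))"
proof -
  have n1: "n \<ge> 1" by fact
  let ?M = "data_measure d n U lam"
  let ?t = "\<lambda>\<omega>. \<Sum>k<d. \<omega> (n+1) k * \<omega> n k"
  let ?H = "hS d n U lam"
  let ?Gs = "pred d n (b_opt d) (A_opt d n U lam)"
  have loss: "icl_loss d n U lam b A = (\<integral>\<omega>. (pred d n b A \<omega> + ?t \<omega>)\<^sup>2 \<partial>?M)" for b A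
    unfolding icl_loss_def Z1_pred ..
  have hq: "?t \<omega> + ?Gs \<omega> = ?H \<omega>" for \<omega> by (rule h_eq[OF n1 orth lam_nonneg])
  have amH: "allmom ?M ?H" by (rule am_hS)
  have lopt: "icl_loss d n U lam (b_opt d) (A_opt d n U lam) = (\<integral>\<omega>. (?H \<omega>)\<^sup>2 \<partial>?M)"
    unfolding loss using hq by (simp add: add.commute)
  have main: "icl_loss d n U lam (b_opt d) (A_opt d n U lam) \<le> icl_loss d n U lam b A" for b A
  proof -
    let ?G = "pred d n b A"
    have amG: "allmom ?M ?G" by (rule am_pred)
    have amGs: "allmom ?M ?Gs" by (rule am_pred)
    have pw: "(?G \<omega> + ?t \<omega>)\<^sup>2 = (?G \<omega> - ?Gs \<omega>)\<^sup>2 + 2 * (?G \<omega> * ?H \<omega>) - 2 * (?Gs \<omega> * ?H \<omega>) + (?H \<omega>)\<^sup>2" for \<omega>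
    proof -
      have alg: "(G + (H - Gs))\<^sup>2 = (G - Gs)\<^sup>2 + 2 * (G * H) - 2 * (Gs * H) + H\<^sup>2" for G Gs H :: real
        by (simp add: power2_eq_square algebra_simps)
      have tq: "?t \<omega> = ?H \<omega> - ?Gs \<omega>" using hq[of \<omega>] by linarith
      show ?thesis unfolding tq by (rule alg)
    qed
    have i1: "integrable ?M (\<lambda>\<omega>. (?G \<omega> - ?Gs \<omega>)\<^sup>2)"
      by (intro allmom_integrable allmom_power[OF fm_DM] allmom_diff amG amGs)
    have i2: "integrable ?M (\<lambda>\<omega>. ?G \<omega> * ?H \<omega>)"
      by (intro allmom_integrable allmom_mult amG amH)
    have i3: "integrable ?M (\<lambda>\<omega>. ?Gs \<omega> * ?H \<omega>)"
      by (intro allmom_integrable allmom_mult amGs amH)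
    have i4: "integrable ?M (\<lambda>\<omega>. (?H \<omega>)\<^sup>2)"
      by (intro allmom_integrable allmom_power[OF fm_DM] amH)
    have o1: "(\<integral>\<omega>. ?G \<omega> * ?H \<omega> \<partial>?M) = 0" by (rule orthog[OF n1 orth lam_nonneg])
    have o2: "(\<integral>\<omega>. ?Gs \<omega> * ?H \<omega> \<partial>?M) = 0" by (rule orthog[OF n1 orth lam_nonneg])
    have "icl_loss d n U lam b A = (\<integral>\<omega>. (?G \<omega> - ?Gs \<omega>)\<^sup>2 + 2 * (?G \<omega> * ?H \<omega>) - 2 * (?Gs \<omega> * ?H \<omega>) + (?H \<omega>)\<^sup>2 \<partial>?M)"
      unfolding loss pw ..
    also have "\<dots> = (\<integral>\<omega>. (?G \<omega> - ?Gs \<omega>)\<^sup>2 \<partial>?M) + 2 * (\<integral>\<omega>. ?G \<omega> * ?H \<omega> \<partial>?M) - 2 * (\<integral>\<omega>. ?Gs \<omega> * ?H \<omega> \<partial>?M) + (\<integral>\<omega>. (?H \<omega>)\<^sup>2 \<partial>?M)"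
      using i1 i2 i3 i4 by simp
    also have "\<dots> = (\<integral>\<omega>. (?G \<omega> - ?Gs \<omega>)\<^sup>2 \<partial>?M) + (\<integral>\<omega>. (?H \<omega>)\<^sup>2 \<partial>?M)"
      using o1 o2 by simp
    also have "\<dots> \<ge> (\<integral>\<omega>. (?H \<omega>)\<^sup>2 \<partial>?M)"
      by (simp add: Bochner_Integration.integral_nonneg)
    finally show ?thesis using lopt by simp
  qed
  have scale: "icl_loss d n U lam (\<lambda>j. \<gamma> * b_opt d j) (\<lambda>i j. A_opt d n U lam i j / \<gamma>) = icl_loss d n U lam (b_opt d) (A_opt d n U lam)"
    if "\<gamma> \<noteq> 0" for \<gamma>
    unfolding loss pred_scale[OF that] ..
  show ?thesis using main scale by simp
qed


end
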